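(* Consider problem (P) and suppose Assumptions A, B, C and D hold. Let $\{(x^t,L_g^t)\}$ be generated by SCP$_{ls}$. Then there exist $\kappa>0$ and $\underline t\in\mathbb N_+$ such that ${\rm dist}(0,\partial\bar F(x^{t+1},x^t,L_g^t))\le\kappa\|x^{t+1}-x^t\|$ for all $t>\underline t$.
   Context: Problem (P): $\min_{x\in\mathbb R^n}F(x):=f(x)+P_1(x)-P_2(x)+\delta_{\{g\le 0\}}(x)$, where $f:\mathbb R^n\to\mathbb R$ is continuously differentiable, $P_1,P_2:\mathbb R^n\to\mathbb R$ are convex and continuous, $g=(g_1,\dots,g_m):\mathbb R^n\to\mathbb R^m$ is continuous with $\{x:g(x)\le0\}\neq\emptyset$ (componentwise inequalities), $\delta_C$ the indicator function of $C$; $\partial$ is the limiting subdifferential. Assumption A: (i) $\nabla f$ is Lipschitz with modulus $L_f$; (ii) each $g_i$ is differentiable with $\nabla g_i$ Lipschitz with modulus $L_{g_i}$; (iii) $F$ is level-bounded. Assumption B (MFCQ): each $g_i$ is continuously differentiable and for every $x$ with $g(x)\le0$ there is $d$ with $\langle\nabla g_i(x),d\rangle<0$ for all $i\in I(x):=\{j:g_j(x)=0\}$. Assumption C: each $g_i$ is twice continuously differentiable. Assumption D: $P_2$ is continuously differentiable on an open set $\Gamma$ containing all stationary points of (P), and $\nabla P_2$ is locally Lipschitz on $\Gamma$. Stationary point: $x$ with $g(x)\le0$ for which there is $\lambda\in\mathbb R^m_+$ with $\lambda_ig_i(x)=0$ for all $i$ and $0\in\nabla f(x)+\partial P_1(x)-\partial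 P_2(x)+\sum_i\lambda_i\nabla g_i(x)$. $\bar G(x,y,w)\in\mathbb R^m$ has components $\bar G_i(x,y,w)=g_i(y)+\langle\nabla g_i(y),x-y\rangle+\frac{w_i}{2}\|x-y\|^2$, and $\bar F(x,y,w):=f(x)+P_1(x)-P_2(x)+\delta_{\{\bar G\le0\}}(x,y,w)$. Algorithm SCP$_{ls}$: fix $c>0$, $0<\underline L<\bar L$, $\tau>1$ and $x^0$ with $g(x^0)\le0$. For $t=0,1,2,\dots$: (1) pick any $\xi^t\in\partial P_2(x^t)$; (2) choose $L_f^{t,0}\in[\underline L,\bar L]$, $L_g^{t,0}\in[\underline L,\bar L]^m$ arbitrarily, set $\tilde L_f=L_f^{t,0}$, $\tilde L_g=L_g^{t,0}$; (3) compute $\tilde x$ solving: minimize $\langle\nabla f(x^t)-\xi^t,x-x^t\rangle+\frac{\tilde L_f}{2}\|x-x^t\|^2+P_1(x)$ subject to $\bar G(x,x^t,\tilde L_g)\le0$. If $g(\tilde x)\le0$ and $F(\tilde x)\le F(x^t)-\frac c2\|\tilde x-x^t\|^2$, set $x^{t+1}=\tilde x$, $L_f^t=\tilde L_f$, $L_g^t=\tilde L_g$ and go to iteration $t+1$; otherwise, if $g(\tilde x)\not\le0$ replace $\tilde L_g$ by $\tau\tilde L_g$, while if $g(\tilde x)\le0$ but the decrease inequality fails replace $\tilde L_f$ by $\tau\tilde L_f$, and repeat step (3). *)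

theory Defs
  imports "HOL-Analysis.Analysis"
begin

text \<open>Frechet (regular) subdifferential: v is a regular subgradient of h at x iff h x is finite
  and liminf_{z -> x, z ~= x} (h z - h x - <v, z - x>) / norm (z - x) >= 0.\<close>
definition frechet_subdiff :: "('a::euclidean_space \<Rightarrow> ereal) \<Rightarrow> 'a \<Rightarrow> 'a set" where
  "frechet_subdiff h x =
     {v. \<bar>h x\<bar> \<noteq> \<infinity> \<and>
         (\<forall>e>0. \<exists>d>0. \<forall>z. norm (z - x) < d \<longrightarrow>
              h z \<ge> h x + ereal (v \<bullet> (z - x) - e * norm (z - x)))}"

definition lim_subdiff :: "('a::euclidean_space \<Rightarrow> ereal) \<Rightarrow> 'a \<Rightarrow> 'a set" where
  "lim_subdiff h x =
     {v. \<bar>h x\<bar> \<noteq> \<infinity> \<and>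
         (\<exists>xs vs. xs \<longlonglongrightarrow> x \<and> (\<lambda>k. h (xs k)) \<longlonglongrightarrow> h x \<and>
                  (\<forall>k. vs k \<in> frechet_subdiff h (xs k)) \<and> vs \<longlonglongrightarrow> v)}"

definition lsubdiff :: "('a::euclidean_space \<Rightarrow> real) \<Rightarrow> 'a \<Rightarrow> 'a set" where
  "lsubdiff h x = lim_subdiff (\<lambda>z. ereal (h z)) x"

definition feas :: "('m::finite \<Rightarrow> 'a \<Rightarrow> real) \<Rightarrow> 'a \<Rightarrow> bool" where
  "feas g x \<longleftrightarrow> (\<forall>i. g i x \<le> 0)"

definition Fobj :: "('a \<Rightarrow> real) \<Rightarrow> ('a \<Rightarrow> real) \<Rightarrow> ('a \<Rightarrow> real) \<Rightarrow> ('m::finite \<Rightarrow> 'a \<Rightarrow> real)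
                    \<Rightarrow> 'a \<Rightarrow> ereal" where
  "Fobj f P1 P2 g x = (if feas g x then ereal (f x + P1 x - P2 x) else \<infinity>)"

definition Gbar :: "('m::finite \<Rightarrow> 'a::real_inner \<Rightarrow> real) \<Rightarrow> ('m \<Rightarrow> 'a \<Rightarrow> 'a)
                    \<Rightarrow> 'a \<Rightarrow> 'a \<Rightarrow> real^'m \<Rightarrow> 'm \<Rightarrow> real" where
  "Gbar g gradg x y w i = g i y + gradg i y \<bullet> (x - y) + w $ i / 2 * (norm (x - y))\<^sup>2"

definition Fbar :: "('a::euclidean_space \<Rightarrow> real) \<Rightarrow> ('a \<Rightarrow> real) \<Rightarrow> ('a \<Rightarrow> real)
                    \<Rightarrow> ('m::finite \<Rightarrow> 'a \<Rightarrow> real) \<Rightarrow> ('m \<Rightarrow> 'a \<Rightarrow> 'a)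
                    \<Rightarrow> 'a \<times> 'a \<times> (real^'m) \<Rightarrow> ereal" where
  "Fbar f P1 P2 g gradg p =
     (case p of (x, y, w) \<Rightarrow>
        if (\<forall>i. Gbar g gradg x y w i \<le> 0) then ereal (f x + P1 x - P2 x) else \<infinity>)"

definition stationary :: "('a::euclidean_space \<Rightarrow> real) \<Rightarrow> ('a \<Rightarrow> 'a) \<Rightarrow> ('a \<Rightarrow> real) \<Rightarrow> ('a \<Rightarrow> real)
                    \<Rightarrow> ('m::finite \<Rightarrow> 'a \<Rightarrow> real) \<Rightarrow> ('m \<Rightarrow> 'a \<Rightarrow> 'a) \<Rightarrow> 'a \<Rightarrow> bool" where
  "stationary f gradf P1 P2 g gradg x \<longleftrightarrow>
     feas g x \<and>
     (\<exists>lam :: 'm \<Rightarrow> real. (\<forall>i. lam i \<ge> 0 \<and> lam i * g i x = 0) \<and>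
        (\<exists>u \<in> lsubdiff P1 x. \<exists>v \<in> lsubdiff P2 x.
            gradf x + u - v + (\<Sum>i\<in>UNIV. lam i *\<^sub>R gradg i x) = 0))"

definition problem_P :: "('a::euclidean_space \<Rightarrow> real) \<Rightarrow> ('a \<Rightarrow> 'a) \<Rightarrow> ('a \<Rightarrow> real) \<Rightarrow> ('a \<Rightarrow> real)
                    \<Rightarrow> ('m::finite \<Rightarrow> 'a \<Rightarrow> real) \<Rightarrow> bool" where
  "problem_P f gradf P1 P2 g \<longleftrightarrow>
     (\<forall>x. (f has_derivative (\<lambda>h. gradf x \<bullet> h)) (at x)) \<and> continuous_on UNIV gradf \<and>
     convex_on UNIV P1 \<and> continuous_on UNIV P1 \<and>
     convex_on UNIV P2 \<and> continuous_on UNIV P2 \<and>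
     (\<forall>i. continuous_on UNIV (g i)) \<and> (\<exists>x. feas g x)"

definition assumption_A :: "('a::euclidean_space \<Rightarrow> real) \<Rightarrow> ('a \<Rightarrow> 'a) \<Rightarrow> ('a \<Rightarrow> real) \<Rightarrow> ('a \<Rightarrow> real)
                    \<Rightarrow> ('m::finite \<Rightarrow> 'a \<Rightarrow> real) \<Rightarrow> ('m \<Rightarrow> 'a \<Rightarrow> 'a) \<Rightarrow> bool" where
  "assumption_A f gradf P1 P2 g gradg \<longleftrightarrow>
     (\<exists>Lf. \<forall>x y. norm (gradf x - gradf y) \<le> Lf * norm (x - y)) \<and>
     (\<forall>i. (\<forall>x. (g i has_derivative (\<lambda>h. gradg i x \<bullet> h)) (at x)) \<and>
          (\<exists>Lgi. \<forall>x y. norm (gradg i x - gradg i y) \<le> Lgi * norm (x - y))) \<and>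
     (\<forall>\<alpha>::real. bounded {x. Fobj f P1 P2 g x \<le> ereal \<alpha>})"

definition assumption_B :: "('m::finite \<Rightarrow> 'a::euclidean_space \<Rightarrow> real) \<Rightarrow> ('m \<Rightarrow> 'a \<Rightarrow> 'a) \<Rightarrow> bool" where
  "assumption_B g gradg \<longleftrightarrow>
     (\<forall>i. (\<forall>x. (g i has_derivative (\<lambda>h. gradg i x \<bullet> h)) (at x)) \<and> continuous_on UNIV (gradg i)) \<and>
     (\<forall>x. feas g x \<longrightarrow> (\<exists>d. \<forall>i. g i x = 0 \<longrightarrow> gradg i x \<bullet> d < 0))"

definition assumption_C :: "('m::finite \<Rightarrow> 'a::euclidean_space \<Rightarrow> real) \<Rightarrow> ('m \<Rightarrow> 'a \<Rightarrow> 'a) \<Rightarrow> bool" where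
  "assumption_C g gradg \<longleftrightarrow>
     (\<forall>i. (\<forall>x. (g i has_derivative (\<lambda>h. gradg i x \<bullet> h)) (at x)) \<and>
          (\<exists>H :: 'a \<Rightarrow> 'a \<Rightarrow>\<^sub>L 'a. (\<forall>x. (gradg i has_derivative blinfun_apply (H x)) (at x)) \<and>
                continuous_on UNIV H))"

definition assumption_D :: "('a::euclidean_space \<Rightarrow> real) \<Rightarrow> ('a \<Rightarrow> 'a) \<Rightarrow> ('a \<Rightarrow> real) \<Rightarrow> ('a \<Rightarrow> real)
                    \<Rightarrow> ('m::finite \<Rightarrow> 'a \<Rightarrow> real) \<Rightarrow> ('m \<Rightarrow> 'a \<Rightarrow> 'a) \<Rightarrow> bool" where
  "assumption_D f gradf P1 P2 g gradg \<longleftrightarrow>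
     (\<exists>\<Gamma> gradP2. open \<Gamma> \<and> {x. stationary f gradf P1 P2 g gradg x} \<subseteq> \<Gamma> \<and>
        (\<forall>x\<in>\<Gamma>. (P2 has_derivative (\<lambda>h. gradP2 x \<bullet> h)) (at x)) \<and>
        continuous_on \<Gamma> gradP2 \<and>
        (\<forall>x\<in>\<Gamma>. \<exists>e>0. \<exists>K. \<forall>y\<in>ball x e \<inter> \<Gamma>. \<forall>z\<in>ball x e \<inter> \<Gamma>.
             norm (gradP2 y - gradP2 z) \<le> K * norm (y - z)))"

definition sub_obj :: "('a::euclidean_space \<Rightarrow> 'a) \<Rightarrow> ('a \<Rightarrow> real) \<Rightarrow> 'a \<Rightarrow> 'a \<Rightarrow> real \<Rightarrow> 'a \<Rightarrow> real" where
  "sub_obj gradf P1 xt xi Lf z = (gradf xt - xi) \<bullet> (z - xt) + Lf / 2 * (norm (z - xt))\<^sup>2 + P1 z"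

definition solves_sub :: "('a::euclidean_space \<Rightarrow> 'a) \<Rightarrow> ('a \<Rightarrow> real) \<Rightarrow> ('m::finite \<Rightarrow> 'a \<Rightarrow> real)
                    \<Rightarrow> ('m \<Rightarrow> 'a \<Rightarrow> 'a) \<Rightarrow> 'a \<Rightarrow> 'a \<Rightarrow> real \<Rightarrow> real^'m \<Rightarrow> 'a \<Rightarrow> bool" where
  "solves_sub gradf P1 g gradg xt xi Lf Lg z \<longleftrightarrow>
     (\<forall>i. Gbar g gradg z xt Lg i \<le> 0) \<and>
     (\<forall>y. (\<forall>i. Gbar g gradg y xt Lg i \<le> 0) \<longrightarrow>
          sub_obj gradf P1 xt xi Lf z \<le> sub_obj gradf P1 xt xi Lf y)"

definition accept :: "('a::euclidean_space \<Rightarrow> real) \<Rightarrow> ('a \<Rightarrow> real) \<Rightarrow> ('a \<Rightarrow> real)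
                    \<Rightarrow> ('m::finite \<Rightarrow> 'a \<Rightarrow> real) \<Rightarrow> real \<Rightarrow> 'a \<Rightarrow> 'a \<Rightarrow> bool" where
  "accept f P1 P2 g c xt z \<longleftrightarrow>
     feas g z \<and> f z + P1 z - P2 z \<le> f xt + P1 xt - P2 xt - c / 2 * (norm (z - xt))\<^sup>2"

text \<open>(x, Lf, Lg) is generated by SCP_ls with parameters c, Lmin, Lmax, tau, using subgradients xi;
  for iteration t the line search produces trial parameters TLf t j, TLg t j and trial points
  Tx t j, j = 0..J t, the last one being accepted.\<close>
definition SCP_ls :: "('a::euclidean_space \<Rightarrow> real) \<Rightarrow> ('a \<Rightarrow> 'a) \<Rightarrow> ('a \<Rightarrow> real) \<Rightarrow> ('a \<Rightarrow> real)
                    \<Rightarrow> ('m::finite \<Rightarrow> 'a \<Rightarrow> real) \<Rightarrow> ('m \<Rightarrow> 'a \<Rightarrow> 'a)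
                    \<Rightarrow> real \<Rightarrow> real \<Rightarrow> real \<Rightarrow> real
                    \<Rightarrow> (nat \<Rightarrow> 'a) \<Rightarrow> (nat \<Rightarrow> real) \<Rightarrow> (nat \<Rightarrow> real^'m) \<Rightarrow> bool" where
  "SCP_ls f gradf P1 P2 g gradg c Lmin Lmax tau x Lf Lg \<longleftrightarrow>
     feas g (x 0) \<and>
     (\<exists>(xi :: nat \<Rightarrow> 'a) (J :: nat \<Rightarrow> nat) (TLf :: nat \<Rightarrow> nat \<Rightarrow> real)
        (TLg :: nat \<Rightarrow> nat \<Rightarrow> real^'m) (Tx :: nat \<Rightarrow> nat \<Rightarrow> 'a).
       \<forall>t. xi t \<in> lsubdiff P2 (x t) \<and>
           Lmin \<le> TLf t 0 \<and> TLf t 0 \<le> Lmax \<and>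
           (\<forall>i. Lmin \<le> TLg t 0 $ i \<and> TLg t 0 $ i \<le> Lmax) \<and>
           (\<forall>j\<le>J t. solves_sub gradf P1 g gradg (x t) (xi t) (TLf t j) (TLg t j) (Tx t j)) \<and>
           (\<forall>j<J t. \<not> accept f P1 P2 g c (x t) (Tx t j) \<and>
               (if \<not> feas g (Tx t j)
                then TLg t (Suc j) = tau *\<^sub>R TLg t j \<and> TLf t (Suc j) = TLf t j
                else TLf t (Suc j) = tau * TLf t j \<and> TLg t (Suc j) = TLg t j)) \<and>
           accept f P1 P2 g c (x t) (Tx t (J t)) \<and>
           x (Suc t) = Tx t (J t) \<and> Lf t = TLf t (J t) \<and> Lg t = TLg t (J t))"

end

theory Submission
  imports Defs
begin



lemma le_eps: fixes A B :: real assumes "\<And>e. e > 0 \<Longrightarrow> A \<le> e * B" shows "A \<le> 0"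
proof (rule ccontr)
  assume "\<not> A \<le> 0"
  hence A: "A > 0" by simp
  show False
  proof (cases "B \<le> 0")
    case True with assms[of 1] A show False by simp
  next
    case False
    with assms[of "A/(2*B)"] A show False by (simp add: field_simps)
  qed
qed

lemma ge_unb: fixes A B b :: real assumes "\<And>n. n > 0 \<Longrightarrow> b \<le> A + n * B" shows "0 \<le> B"
proof (rule ccontr)
  assume "\<not> 0 \<le> B" hence B: "B < 0" by simp
  define n where "n = (\<bar>A - b\<bar> + 1) / (- B)"
  have "n > 0" using B unfolding n_def by (intro divide_pos_pos) auto
  hence "b \<le> A + n * B" by (rule assms)
  also have "n * B = - (\<bar>A - b\<bar> + 1)" using B by (simp add: n_def field_simps)
  finally show False by linarith
qed

lemma ctc: "continuous_on UNIV f \<Longrightarrow> (X \<longlongrightarrow> l) F \<Longrightarrow> ((\<lambda>n. f (X n)) \<longlongrightarrow> f l) F"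
  by (rule continuous_on_tendsto_compose) auto

lemma frechet_quad:
  fixes H :: "'a::euclidean_space \<Rightarrow> ereal"
  assumes fin: "\<bar>H p\<bar> \<noteq> \<infinity>" and r: "r > 0"
    and le: "\<And>z. norm (z - p) < r \<Longrightarrow> H p + ereal (v \<bullet> (z - p) - K * (norm (z - p))\<^sup>2) \<le> H z"
    and K: "K \<ge> 0"
  shows "v \<in> frechet_subdiff H p"
proof -
  obtain a where a: "H p = ereal a" using fin by (cases "H p") auto
  have "\<exists>d>0. \<forall>z. norm (z - p) < d \<longrightarrow> H p + ereal (v \<bullet> (z - p) - e * norm (z - p)) \<le> H z"
    if e: "e > 0" for e
  proof (intro exI[of _ "min r (e / (K + 1))"] conjI allI impI)
    show "min r (e / (K + 1)) > 0" using r e K by simp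
    fix z assume z: "norm (z - p) < min r (e / (K + 1))"
    have "K * norm (z - p) \<le> e"
    proof -
      have "K * norm (z - p) \<le> K * (e / (K + 1))" using z K by (intro mult_left_mono) auto
      also have "\<dots> \<le> e" using K e by (simp add: field_simps)
      finally show ?thesis .
    qed
    hence "K * (norm (z - p))\<^sup>2 \<le> e * norm (z - p)"
      by (simp add: power2_eq_square mult.assoc[symmetric] mult_right_mono)
    hence "H p + ereal (v \<bullet> (z - p) - e * norm (z - p)) \<le> H p + ereal (v \<bullet> (z - p) - K * (norm (z - p))\<^sup>2)"
      by (simp add: a)
    also have "\<dots> \<le> H z" using le z by simp
    finally show "H p + ereal (v \<bullet> (z - p) - e * norm (z - p)) \<le> H z" .
  qed
  with fin show ?thesis unfolding frechet_subdiff_def by auto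
qed

lemma frechet_of_deriv:
  fixes H :: "'a::euclidean_space \<Rightarrow> ereal"
  assumes fin: "\<bar>H p\<bar> \<noteq> \<infinity>" and D: "(R has_derivative (\<lambda>h. v \<bullet> h)) (at p)"
    and le: "\<And>z. H p + ereal (R z - R p) \<le> H z"
  shows "v \<in> frechet_subdiff H p"
proof -
  obtain a where a: "H p = ereal a" using fin by (cases "H p") auto
  have "\<exists>d>0. \<forall>z. norm (z - p) < d \<longrightarrow> H p + ereal (v \<bullet> (z - p) - e * norm (z - p)) \<le> H z"
    if e: "e > 0" for e
  proof -
    obtain d where d: "d > 0" and dd: "\<And>y. norm (y - p) < d \<Longrightarrow> norm (R y - R p - v \<bullet> (y - p)) \<le> e * norm (y - p)"
      using D e unfolding has_derivative_at_alt by blast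
    have "H p + ereal (v \<bullet> (z - p) - e * norm (z - p)) \<le> H z" if z: "norm (z - p) < d" for z
    proof -
      have "v \<bullet> (z - p) - e * norm (z - p) \<le> R z - R p" using dd[OF z] by (simp add: abs_le_iff)
      hence "H p + ereal (v \<bullet> (z - p) - e * norm (z - p)) \<le> H p + ereal (R z - R p)" by (simp add: a)
      also have "\<dots> \<le> H z" by (rule le)
      finally show ?thesis .
    qed
    with d show ?thesis by blast
  qed
  with fin show ?thesis unfolding frechet_subdiff_def by auto
qed

lemma frechet_imp_lim: assumes v: "v \<in> frechet_subdiff h x" shows "v \<in> lim_subdiff h x"
proof -
  have "\<bar>h x\<bar> \<noteq> \<infinity>" using v by (simp add: frechet_subdiff_def)
  moreover have "\<exists>xs vs. xs \<longlonglongrightarrow> x \<and> (\<lambda>k::nat. h (xs k)) \<longlonglongrightarrow> h x \<and> (\<forall>k. vs k \<in> frechet_subdiff h (xs k)) \<and> vs \<longlonglongrightarrow> v"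
    by (rule exI[of _ "\<lambda>k::nat. x"], rule exI[of _ "\<lambda>k::nat. v"]) (use v in simp)
  ultimately show ?thesis unfolding lim_subdiff_def by blast
qed

lemma sg_frechet:
  fixes P :: "'a::euclidean_space \<Rightarrow> real"
  assumes "\<And>z. P x + v \<bullet> (z - x) \<le> P z" shows "v \<in> frechet_subdiff (\<lambda>z. ereal (P z)) x"
  by (rule frechet_quad[where r=1 and K=0]) (use assms in auto)

lemma frechet_convex_sg:
  fixes P :: "'a::euclidean_space \<Rightarrow> real"
  assumes cv: "convex_on UNIV P" and v: "v \<in> frechet_subdiff (\<lambda>z. ereal (P z)) x"
  shows "P x + v \<bullet> (z - x) \<le> P z"
proof (rule ccontr)
  assume nt: "\<not> ?thesis"
  define del where "del = P x + v \<bullet> (z - x) - P z"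
  have del: "del > 0" using nt by (simp add: del_def)
  have zx: "norm (z - x) > 0" using del by (auto simp: del_def)
  define e where "e = del / (2 * norm (z - x))"
  have e: "e > 0" using del zx by (simp add: e_def)
  obtain d where d: "d > 0" and dd: "\<And>y. norm (y - x) < d \<Longrightarrow> ereal (P x) + ereal (v \<bullet> (y - x) - e * norm (y - x)) \<le> ereal (P y)"
    using v e unfolding frechet_subdiff_def by blast
  define s where "s = min (1/2) (d / (2 * norm (z - x)))"
  have s: "0 < s" "s \<le> 1" using d zx by (auto simp: s_def)
  define y where "y = (1 - s) *\<^sub>R x + s *\<^sub>R z"
  have yx: "y - x = s *\<^sub>R (z - x)" by (simp add: y_def algebra_simps)
  have "norm (y - x) = s * norm (z - x)" using s by (simp add: yx)
  also have "\<dots> \<le> d / (2 * norm (z - x)) * norm (z - x)" using zx by (intro mult_right_mono) (auto simp: s_def)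
  also have "\<dots> < d" using zx d by simp
  finally have "norm (y - x) < d" .
  hence 1: "P x + s * (v \<bullet> (z - x)) - e * (s * norm (z - x)) \<le> P y" using dd[of y] s by (simp add: yx)
  have 2: "P y \<le> (1 - s) * P x + s * P z" using convex_onD[OF cv, of s x z] s by (simp add: y_def)
  from 1 2 have "s * (P x + v \<bullet> (z - x) - e * norm (z - x)) \<le> s * P z" by (simp add: algebra_simps)
  hence "P x + v \<bullet> (z - x) - e * norm (z - x) \<le> P z" using s by simp
  hence "del \<le> e * norm (z - x)" unfolding del_def by linarith
  moreover have "e * norm (z - x) = del / 2" using zx by (simp add: e_def)
  ultimately show False using del by linarith
qed

lemma lsub_convex_sg:
  fixes P :: "'a::euclidean_space \<Rightarrow> real"
  assumes cv: "convex_on UNIV P" and ct: "continuous_on UNIV P" and v: "v \<in> lsubdiff P x"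
  shows "P x + v \<bullet> (z - x) \<le> P z"
proof -
  obtain xs vs where xs: "xs \<longlonglongrightarrow> x" and vs: "vs \<longlonglongrightarrow> v" and fr: "\<And>k. vs k \<in> frechet_subdiff (\<lambda>z. ereal (P z)) (xs k)"
    using v unfolding lsubdiff_def lim_subdiff_def by blast
  have le: "\<And>k. P (xs k) + vs k \<bullet> (z - xs k) \<le> P z" using frechet_convex_sg[OF cv fr] .
  have "(\<lambda>k. P (xs k) + vs k \<bullet> (z - xs k)) \<longlonglongrightarrow> P x + v \<bullet> (z - x)"
    by (intro tendsto_intros xs vs ctc[OF ct xs])
  thus ?thesis using le by (intro LIMSEQ_le_const2) auto
qed

lemma sg_grad:
  fixes P :: "'a::euclidean_space \<Rightarrow> real"
  assumes sg: "\<And>z. P x + v \<bullet> (z - x) \<le> P z" and D: "(P has_derivative (\<lambda>h. G \<bullet> h)) (at x)"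
  shows "v = G"
proof (rule ccontr)
  assume ne: "v \<noteq> G"
  define u where "u = v - G"
  have u: "norm u > 0" using ne by (simp add: u_def)
  have "(norm u)\<^sup>2 \<le> e * norm u" if e: "e > 0" for e
  proof -
    obtain d where d: "d > 0" and dd: "\<And>y. norm (y - x) < d \<Longrightarrow> norm (P y - P x - G \<bullet> (y - x)) \<le> e * norm (y - x)"
      using D e unfolding has_derivative_at_alt by blast
    define s where "s = d / (2 * norm u)"
    have s: "s > 0" using d u by (simp add: s_def)
    have ns: "norm ((x + s *\<^sub>R u) - x) < d" using s u d by (simp add: s_def)
    have 1: "P (x + s *\<^sub>R u) - P x - s * (G \<bullet> u) \<le> e * (s * norm u)"
      using dd[OF ns] s by (simp add: abs_le_iff)
    have 2: "P x + s * (v \<bullet> u) \<le> P (x + s *\<^sub>R u)" using sg[of "x + s *\<^sub>R u"] by simp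
    have "s * (u \<bullet> u) \<le> s * (e * norm u)" using 1 2 by (simp add: u_def inner_diff_left algebra_simps)
    hence "u \<bullet> u \<le> e * norm u" using s by simp
    thus ?thesis by (simp add: power2_norm_eq_inner)
  qed
  hence "(norm u)\<^sup>2 \<le> 0" by (intro le_eps) auto
  thus False using u by simp
qed

lemma descent:
  fixes F :: "'a::euclidean_space \<Rightarrow> real"
  assumes D: "\<And>x. (F has_derivative (\<lambda>h. Gr x \<bullet> h)) (at x)"
    and L: "\<And>x y. norm (Gr x - Gr y) \<le> L * norm (x - y)" and L0: "L \<ge> 0"
  shows "F z \<le> F x + Gr x \<bullet> (z - x) + L * (norm (z - x))\<^sup>2"
proof -
  define u where "u = z - x"
  define phi where "phi = (\<lambda>s. F (x + s *\<^sub>R u))"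
  have dphi: "(phi has_real_derivative (Gr (x + s *\<^sub>R u) \<bullet> u)) (at s)" for s
  proof -
    have "((\<lambda>s. x + s *\<^sub>R u) has_derivative (\<lambda>h. h *\<^sub>R u)) (at s)" by (auto intro!: derivative_eq_intros)
    from has_derivative_compose[OF this D] have "(phi has_derivative (\<lambda>h. (Gr (x + s *\<^sub>R u) \<bullet> u) * h)) (at s)"
      by (simp add: phi_def mult.commute)
    thus ?thesis by (simp add: has_field_derivative_def)
  qed
  obtain s where s: "0 < s" "s < 1" and eq: "phi 1 - phi 0 = (1 - 0) * (Gr (x + s *\<^sub>R u) \<bullet> u)"
    using MVT2[of 0 1 phi "\<lambda>s. Gr (x + s *\<^sub>R u) \<bullet> u"] dphi by auto
  have "Gr (x + s *\<^sub>R u) \<bullet> u - Gr x \<bullet> u \<le> norm (Gr (x + s*\<^sub>R u) - Gr x) * norm u"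
    by (metis inner_diff_left norm_cauchy_schwarz)
  also have "\<dots> \<le> L * norm (s *\<^sub>R u) * norm u" using L[of "x + s*\<^sub>R u" x] by (simp add: mult_right_mono)
  also have "\<dots> \<le> L * norm u * norm u"
  proof -
    have "norm (s *\<^sub>R u) \<le> norm u" using s by (simp add: mult_left_le_one_le)
    thus ?thesis using L0 by (intro mult_right_mono mult_left_mono) auto
  qed
  finally show ?thesis using eq by (simp add: phi_def u_def power2_eq_square)
qed



lemma Gbar_deriv:
  fixes g :: "'m::finite \<Rightarrow> 'a::euclidean_space \<Rightarrow> real" and gradg :: "'m \<Rightarrow> 'a \<Rightarrow> 'a" and Hb :: "'a \<Rightarrow>\<^sub>L 'a"
  assumes dg: "(g i has_derivative (\<lambda>h. gradg i b \<bullet> h)) (at b)" and dH: "(gradg i has_derivative blinfun_apply Hb) (at b)"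
  shows "((\<lambda>z::'a\<times>'a\<times>(real^'m). Gbar g gradg (fst z) (fst (snd z)) (snd (snd z)) i) has_derivative
     (\<lambda>h. gradg i b \<bullet> fst (snd h) + (gradg i b \<bullet> (fst h - fst (snd h)) + Hb (fst (snd h)) \<bullet> (a - b))
        + (snd (snd h) $ i / 2 * ((a - b) \<bullet> (a - b)) + w $ i / 2 * ((a - b) \<bullet> (fst h - fst (snd h)) + (fst h - fst (snd h)) \<bullet> (a - b)))))
     (at (a, b, w))"
proof -
  let ?p = "(a, b, w) :: 'a\<times>'a\<times>(real^'m)"
  have dy: "((\<lambda>z::'a\<times>'a\<times>(real^'m). fst (snd z)) has_derivative (\<lambda>h. fst (snd h))) (at ?p)"
    by (intro bounded_linear_imp_has_derivative bounded_linear_compose[OF bounded_linear_fst bounded_linear_snd])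
  have dx: "((\<lambda>z::'a\<times>'a\<times>(real^'m). fst z) has_derivative (\<lambda>h. fst h)) (at ?p)"
    by (intro bounded_linear_imp_has_derivative bounded_linear_fst)
  have dw: "((\<lambda>z::'a\<times>'a\<times>(real^'m). snd (snd z) $ i / 2) has_derivative (\<lambda>h. snd (snd h) $ i / 2)) (at ?p)"
    by (intro bounded_linear_imp_has_derivative bounded_linear_compose[OF bounded_linear_divide] bounded_linear_compose[OF bounded_linear_vec_nth] bounded_linear_compose[OF bounded_linear_snd bounded_linear_snd])
  have g1: "((\<lambda>z::'a\<times>'a\<times>(real^'m). g i (fst (snd z))) has_derivative (\<lambda>h. gradg i b \<bullet> fst (snd h))) (at ?p)"
    using has_derivative_compose[OF dy, of "g i"] dg by simp
  have g2: "((\<lambda>z::'a\<times>'a\<times>(real^'m). gradg i (fst (snd z))) has_derivative (\<lambda>h. Hb (fst (snd h)))) (at ?p)"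
    using has_derivative_compose[OF dy, of "gradg i"] dH by simp
  have dxy: "((\<lambda>z::'a\<times>'a\<times>(real^'m). fst z - fst (snd z)) has_derivative (\<lambda>h. fst h - fst (snd h))) (at ?p)"
    by (intro has_derivative_diff dx dy)
  have "((\<lambda>z::'a\<times>'a\<times>(real^'m). g i (fst (snd z)) + gradg i (fst (snd z)) \<bullet> (fst z - fst (snd z)) + snd (snd z) $ i / 2 * ((fst z - fst (snd z)) \<bullet> (fst z - fst (snd z)))) has_derivative
     (\<lambda>h. gradg i b \<bullet> fst (snd h) + (gradg i b \<bullet> (fst h - fst (snd h)) + Hb (fst (snd h)) \<bullet> (a - b))
        + (snd (snd h) $ i / 2 * ((a - b) \<bullet> (a - b)) + w $ i / 2 * ((a - b) \<bullet> (fst h - fst (snd h)) + (fst h - fst (snd h)) \<bullet> (a - b)))))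
     (at ?p)"
    apply (rule has_derivative_add[OF has_derivative_add[OF g1]])
    apply (rule has_derivative_eq_rhs, rule has_derivative_inner[OF g2 dxy], simp)
    apply (rule has_derivative_eq_rhs, rule has_derivative_mult[OF dw has_derivative_inner[OF dxy dxy]])
    apply (auto simp: algebra_simps)
    done
  thus ?thesis by (simp add: Gbar_def power2_norm_eq_inner)
qed

lemma Gbar_deriv_x:
  fixes g :: "'m::finite \<Rightarrow> 'a::euclidean_space \<Rightarrow> real" and gradg :: "'m \<Rightarrow> 'a \<Rightarrow> 'a"
  shows "((\<lambda>z::'a\<times>'a\<times>(real^'m). Gbar g gradg (fst z) y w i) has_derivative
     (\<lambda>h. gradg i y \<bullet> fst h + w $ i / 2 * ((a - y) \<bullet> fst h + fst h \<bullet> (a - y)))) (at (a, b, w'))"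
proof -
  let ?p = "(a, b, w') :: 'a\<times>'a\<times>(real^'m)"
  have dx: "((\<lambda>z::'a\<times>'a\<times>(real^'m). fst z - y) has_derivative (\<lambda>h. fst h)) (at ?p)"
    by (rule has_derivative_eq_rhs, rule has_derivative_diff[OF bounded_linear_imp_has_derivative[OF bounded_linear_fst] has_derivative_const]) auto
  have "((\<lambda>z::'a\<times>'a\<times>(real^'m). g i y + gradg i y \<bullet> (fst z - y) + w $ i / 2 * ((fst z - y) \<bullet> (fst z - y))) has_derivative
     (\<lambda>h. gradg i y \<bullet> fst h + w $ i / 2 * ((a - y) \<bullet> fst h + fst h \<bullet> (a - y)))) (at ?p)"
    apply (rule has_derivative_eq_rhs)
    apply (rule has_derivative_add[OF has_derivative_add[OF has_derivative_const] has_derivative_mult[OF has_derivative_const has_derivative_inner[OF dx dx]]])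
    apply (rule has_derivative_inner[OF has_derivative_const dx])
    apply auto
    done
  thus ?thesis by (simp add: Gbar_def power2_norm_eq_inner)
qed

lemma convex_normsq: "convex_on UNIV (\<lambda>z::'a::real_inner. (norm (z - a))\<^sup>2)"
proof (rule convex_onI)
  fix t :: real and x y :: 'a assume t: "0 < t" "t < 1"
  define p where "p = x - a" define q where "q = y - a"
  have e: "(1 - t) *\<^sub>R x + t *\<^sub>R y - a = (1 - t) *\<^sub>R p + t *\<^sub>R q" by (simp add: p_def q_def algebra_simps)
  have "(1 - t) * (norm p)\<^sup>2 + t * (norm q)\<^sup>2 - (norm ((1 - t) *\<^sub>R p + t *\<^sub>R q))\<^sup>2 = t * (1 - t) * (norm (p - q))\<^sup>2"
    unfolding power2_norm_eq_inner by (simp add: inner_simps inner_commute algebra_simps)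
  moreover have "t * (1 - t) * (norm (p - q))\<^sup>2 \<ge> 0" using t by simp
  ultimately show "(norm ((1 - t) *\<^sub>R x + t *\<^sub>R y - a))\<^sup>2 \<le> (1 - t) * (norm (x - a))\<^sup>2 + t * (norm (y - a))\<^sup>2"
    unfolding e p_def[symmetric] q_def[symmetric] by linarith
qed simp

lemma convex_lin: "convex_on UNIV (\<lambda>z::'a::real_inner. v \<bullet> (z - a) + k)"
  by (rule convex_onI) (auto simp: inner_diff_right inner_add_right algebra_simps)

lemma convex_sub_obj: "Lf \<ge> 0 \<Longrightarrow> convex_on UNIV P1 \<Longrightarrow> convex_on UNIV (sub_obj gradf P1 xt xi Lf)"
  unfolding sub_obj_def
  by (intro convex_on_add convex_on_cmul convex_lin[where k=0, simplified] convex_normsq) auto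

lemma convex_Gbar: "w $ i \<ge> 0 \<Longrightarrow> convex_on UNIV (\<lambda>z. Gbar g gradg z y w i)"
  unfolding Gbar_def
  using convex_on_add[OF convex_lin[of "gradg i y" y "g i y"] convex_on_cmul[OF _ convex_normsq, of "w $ i / 2" y]]
  by (simp add: algebra_simps)

lemma neg_comb: fixes a b u v :: real assumes "a < 0" "b < 0" "0 \<le> u" "0 \<le> v" "u + v = 1" shows "u * a + v * b < 0"
proof (cases "u > 0")
  case True
  hence "u * a < 0" using assms by (simp add: mult_pos_neg)
  moreover have "v * b \<le> 0" using assms by (simp add: mult_nonneg_nonpos)
  ultimately show ?thesis by linarith
next
  case False hence "u = 0" using assms by simp
  thus ?thesis using assms by simp
qed

lemma kkt:
  fixes psi :: "'a::euclidean_space \<Rightarrow> real" and G :: "'m::finite \<Rightarrow> 'a \<Rightarrow> real"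
  assumes cpsi: "convex_on UNIV psi" and cG: "\<And>i. convex_on UNIV (G i)"
    and feas0: "\<And>i. G i x0 \<le> 0"
    and opt: "\<And>z. (\<forall>i. G i z \<le> 0) \<Longrightarrow> psi x0 \<le> psi z"
    and slater: "\<And>i. G i xs < 0"
  shows "\<exists>lam::real^'m. (\<forall>i. 0 \<le> lam$i \<and> lam$i * G i x0 = 0) \<and> (\<forall>z. psi x0 \<le> psi z + (\<Sum>i\<in>UNIV. lam$i * G i z))"
proof -
  define S :: "(real \<times> (real^'m)) set" where "S = {p. fst p < 0 \<and> (\<forall>i. snd p $ i < 0)}"
  define T :: "(real \<times> (real^'m)) set" where "T = {p. \<exists>z. psi z - psi x0 \<le> fst p \<and> (\<forall>i. G i z \<le> snd p $ i)}"
  have cS: "convex S" unfolding convex_def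
  proof (intro ballI allI impI)
    fix p q :: "real \<times> (real^'m)" and u v :: real
    assume pq: "p \<in> S" "q \<in> S" and uv: "0 \<le> u" "0 \<le> v" "u + v = 1"
    show "u *\<^sub>R p + v *\<^sub>R q \<in> S" using pq uv by (auto simp: S_def intro!: neg_comb)
  qed
  have cT: "convex T" unfolding convex_def
  proof (intro ballI allI impI)
    fix p q :: "real \<times> (real^'m)" and u v :: real
    assume pq: "p \<in> T" "q \<in> T" and uv: "0 \<le> u" "0 \<le> v" "u + v = 1"
    obtain z1 where z1: "psi z1 - psi x0 \<le> fst p" "\<And>i. G i z1 \<le> snd p $ i" using pq(1) by (auto simp: T_def)
    obtain z2 where z2: "psi z2 - psi x0 \<le> fst q" "\<And>i. G i z2 \<le> snd q $ i" using pq(2) by (auto simp: T_def)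
    have uu: "u = 1 - v" using uv by simp
    define z where "z = (1 - v) *\<^sub>R z1 + v *\<^sub>R z2"
    have "psi z \<le> (1 - v) * psi z1 + v * psi z2" unfolding z_def using uv by (intro convex_onD[OF cpsi]) auto
    also have "\<dots> \<le> (1 - v) * (fst p + psi x0) + v * (fst q + psi x0)"
      using uv z1 z2 by (intro add_mono mult_left_mono) auto
    finally have 1: "psi z - psi x0 \<le> fst (u *\<^sub>R p + v *\<^sub>R q)" unfolding uu by (simp add: algebra_simps)
    have 2: "G i z \<le> snd (u *\<^sub>R p + v *\<^sub>R q) $ i" for i
    proof -
      have "G i z \<le> (1 - v) * G i z1 + v * G i z2" unfolding z_def using uv by (intro convex_onD[OF cG]) auto
      also have "\<dots> \<le> (1 - v) * snd p $ i + v * snd q $ i"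
        using uv z1 z2 by (intro add_mono mult_left_mono) auto
      finally show ?thesis unfolding uu by simp
    qed
    show "u *\<^sub>R p + v *\<^sub>R q \<in> T" using 1 2 by (auto simp: T_def)
  qed
  have S0: "(-1, \<chi> i. -1) \<in> S" by (simp add: S_def)
  have T0: "(0, 0) \<in> T" unfolding T_def using feas0 by auto
  have disj: "S \<inter> T = {}"
  proof (rule ccontr)
    assume "S \<inter> T \<noteq> {}"
    then obtain p where p: "p \<in> S" "p \<in> T" by blast
    then obtain z where z: "psi z - psi x0 \<le> fst p" "\<And>i. G i z \<le> snd p $ i" by (auto simp: T_def)
    have "\<forall>i. G i z \<le> 0"
    proof
      fix i have "snd p $ i < 0" using p(1) by (simp add: S_def)
      thus "G i z \<le> 0" using z(2)[of i] by linarith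
    qed
    hence "psi x0 \<le> psi z" by (rule opt)
    thus False using z(1) p(1) by (auto simp: S_def)
  qed
  obtain a b where a0: "a \<noteq> 0" and aS: "\<And>p. p \<in> S \<Longrightarrow> a \<bullet> p \<le> b" and aT: "\<And>p. p \<in> T \<Longrightarrow> b \<le> a \<bullet> p"
    using separating_hyperplane_sets[OF cS cT _ _ disj] S0 T0 by blast
  obtain a0 a1 where a: "a = (a0, a1)" by (cases a)
  define tz where "tz z = (psi z - psi x0, \<chi> i. G i z)" for z
  have tzT: "tz z + (n, m) \<in> T" if "n \<ge> 0" "\<And>i. m $ i \<ge> 0" for z n m
    unfolding T_def tz_def using that by (auto intro!: exI[of _ z])
  have a0pos: "0 \<le> a0"
  proof (rule ge_unb)
    fix n :: real assume "n > 0"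
    from aT[OF tzT[of n 0 x0]] this show "b \<le> a \<bullet> tz x0 + n * a0" by (simp add: a inner_add_right mult.commute)
  qed
  have a1pos: "0 \<le> a1 $ i" for i
  proof (rule ge_unb)
    fix n :: real assume "n > 0"
    have "\<And>j. 0 \<le> (n *\<^sub>R axis i (1::real)) $ j" using \<open>n > 0\<close> by (simp add: axis_def)
    from aT[OF tzT[of 0 "n *\<^sub>R axis i 1" x0, OF _ this]] show "b \<le> a \<bullet> tz x0 + n * a1 $ i"
      by (simp add: a inner_add_right inner_axis)
  qed
  define C where "C = a0 + (\<Sum>i\<in>UNIV. a1 $ i)"
  have bC: "- e * C \<le> b" if e: "e > 0" for e
  proof -
    have "(-e, \<chi> i. -e) \<in> S" using e by (simp add: S_def)
    from aS[OF this] show ?thesis by (simp add: a C_def inner_vec_def sum_distrib_left algebra_simps)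
  qed
  have main: "0 \<le> a0 * (psi z - psi x0) + (\<Sum>i\<in>UNIV. a1 $ i * G i z)" for z
  proof -
    have "- (a0 * (psi z - psi x0) + (\<Sum>i\<in>UNIV. a1 $ i * G i z)) \<le> 0"
    proof (rule le_eps)
      fix e :: real assume e: "e > 0"
      have "b \<le> a \<bullet> tz z" using aT[OF tzT[of 0 0 z]] by (simp add: zero_prod_def[symmetric])
      hence "b \<le> a0 * (psi z - psi x0) + (\<Sum>i\<in>UNIV. a1 $ i * G i z)" by (simp add: a tz_def inner_vec_def)
      with bC[OF e] show "- (a0 * (psi z - psi x0) + (\<Sum>i\<in>UNIV. a1 $ i * G i z)) \<le> e * C" by linarith
    qed
    thus ?thesis by linarith
  qed
  have a0gt: "0 < a0"
  proof (rule ccontr)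
    assume "\<not> 0 < a0" hence a00: "a0 = 0" using a0pos by simp
    hence "a1 \<noteq> 0" using a0 a by (auto simp: zero_prod_def)
    then obtain i where "a1 $ i \<noteq> 0" by (auto simp: vec_eq_iff)
    hence ai: "a1 $ i > 0" using a1pos[of i] by simp
    have "(\<Sum>j\<in>UNIV. a1 $ j * G j xs) = a1 $ i * G i xs + (\<Sum>j\<in>UNIV - {i}. a1 $ j * G j xs)"
      by (simp add: sum.remove)
    also have "(\<Sum>j\<in>UNIV - {i}. a1 $ j * G j xs) \<le> 0"
      using a1pos slater by (intro sum_nonpos) (simp add: mult_nonneg_nonpos less_imp_le)
    moreover have "a1 $ i * G i xs < 0" using ai slater[of i] by (simp add: mult_pos_neg)
    ultimately have "(\<Sum>j\<in>UNIV. a1 $ j * G j xs) < 0" by linarith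
    with main[of xs] a00 show False by simp
  qed
  define lam where "lam = (1 / a0) *\<^sub>R a1"
  have lamc: "lam $ i = a1 $ i / a0" for i by (simp add: lam_def)
  have lag: "psi x0 \<le> psi z + (\<Sum>i\<in>UNIV. lam$i * G i z)" for z
  proof -
    have "(\<Sum>i\<in>UNIV. lam$i * G i z) = (\<Sum>i\<in>UNIV. a1 $ i * G i z) / a0"
      by (simp add: lamc sum_divide_distrib)
    moreover have "0 \<le> (psi z - psi x0) + (\<Sum>i\<in>UNIV. a1 $ i * G i z) / a0"
      using main[of z] a0gt by (simp add: field_simps)
    ultimately show ?thesis by simp
  qed
  have lpos: "0 \<le> lam $ i" for i using a1pos[of i] a0gt by (simp add: lamc)
  have tn: "\<forall>i\<in>UNIV. 0 \<le> - (lam$i * G i x0)" using lpos feas0 by (simp add: mult_nonneg_nonpos)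
  have "(\<Sum>i\<in>UNIV. - (lam$i * G i x0)) \<le> 0" using lag[of x0] by (simp add: sum_negf)
  hence "(\<Sum>i\<in>UNIV. - (lam$i * G i x0)) = 0" using sum_nonneg[of UNIV "\<lambda>i. - (lam$i * G i x0)"] tn by simp
  hence "\<forall>i. - (lam$i * G i x0) = 0" using sum_nonneg_eq_0_iff[of UNIV "\<lambda>i. - (lam$i * G i x0)"] tn by simp
  thus ?thesis using lpos lag by (intro exI[of _ lam]) auto
qed

lemma quad_neg:
  fixes A B C :: real assumes A: "A \<le> 0" and C: "C \<ge> 0" and AB: "A = 0 \<Longrightarrow> B < 0"
  shows "\<exists>b>0. \<forall>s. 0 < s \<and> s < b \<longrightarrow> A + s * B + s\<^sup>2 * C < 0"
proof (cases "A < 0")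
  case True
  define b where "b = min 1 (- A / (2 * (\<bar>B\<bar> + C + 1)))"
  have "- A / (2 * (\<bar>B\<bar> + C + 1)) > 0" using True C by (intro divide_pos_pos) auto
  hence b: "b > 0" unfolding b_def by simp
  have "A + s * B + s\<^sup>2 * C < 0" if s: "0 < s" "s < b" for s
  proof -
    have s1: "s < 1" using s by (simp add: b_def)
    have "s * B \<le> s * \<bar>B\<bar>" using s by (simp add: mult_left_mono)
    moreover have "s\<^sup>2 * C \<le> s * C" using s s1 C by (simp add: power2_eq_square mult_right_mono mult_left_le_one_le)
    moreover have "s * (\<bar>B\<bar> + C + 1) < b * (\<bar>B\<bar> + C + 1)" using s C by (intro mult_strict_right_mono) auto
    moreover have "b * (\<bar>B\<bar> + C + 1) \<le> - A / 2"
    proof -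
      have "b * (\<bar>B\<bar> + C + 1) \<le> - A / (2 * (\<bar>B\<bar> + C + 1)) * (\<bar>B\<bar> + C + 1)"
        using C by (intro mult_right_mono) (auto simp: b_def)
      also have "\<dots> = - A / 2" using C by (simp add: field_simps)
      finally show ?thesis .
    qed
    moreover have "s * (\<bar>B\<bar> + C + 1) = s * \<bar>B\<bar> + s * C + s" by (simp add: algebra_simps)
    ultimately show ?thesis using True s by linarith
  qed
  with b show ?thesis by blast
next
  case False
  hence A0: "A = 0" using A by simp
  hence B: "B < 0" by (rule AB)
  define b where "b = - B / (C + 1)"
  have b: "b > 0" using B C unfolding b_def by (intro divide_pos_pos) auto
  have "A + s * B + s\<^sup>2 * C < 0" if s: "0 < s" "s < b" for s
  proof -
    have "s * C \<le> b * C" using s C by (intro mult_right_mono) auto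
    also have "b * C < - B" using B C by (simp add: b_def field_simps)
    finally have "B + s * C < 0" by linarith
    hence "s * (B + s * C) < 0" using s by (simp add: mult_pos_neg)
    thus ?thesis using A0 by (simp add: power2_eq_square algebra_simps)
  qed
  with b show ?thesis by blast
qed

lemma repr:
  fixes D :: "'b::euclidean_space \<Rightarrow> real"
  assumes lin: "linear D" and bd: "\<And>h. \<bar>D h\<bar> \<le> C * norm h"
  shows "\<exists>v. (\<forall>h. D h = v \<bullet> h) \<and> norm v \<le> C"
proof -
  define v where "v = (\<Sum>b\<in>Basis. D b *\<^sub>R b)"
  have Dv: "D h = v \<bullet> h" for h
  proof -
    have "D h = D (\<Sum>b\<in>Basis. (h \<bullet> b) *\<^sub>R b)" by (simp add: euclidean_representation)
    also have "\<dots> = (\<Sum>b\<in>Basis. (h \<bullet> b) * D b)" by (simp add: linear_sum[OF lin] linear_scale[OF lin])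
    also have "\<dots> = (\<Sum>b\<in>Basis. D b * (b \<bullet> h))" by (intro sum.cong refl) (simp add: inner_commute)
    also have "\<dots> = v \<bullet> h" by (simp add: v_def inner_sum_left)
    finally show ?thesis .
  qed
  obtain b0 :: 'b where b0: "b0 \<in> Basis" using nonempty_Basis by blast
  have C0: "C \<ge> 0" using bd[of b0] b0 by (simp add: order_trans[OF abs_ge_zero])
  have "norm v \<le> C"
  proof (cases "v = 0")
    case True thus ?thesis using C0 by simp
  next
    case False
    have "(norm v)\<^sup>2 = D v" by (simp add: Dv power2_norm_eq_inner)
    also have "\<dots> \<le> C * norm v" using bd[of v] by simp
    finally have "norm v * norm v \<le> C * norm v" by (simp add: power2_eq_square)
    thus ?thesis using False by simp
  qed
  with Dv show ?thesis by blast
qed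

lemma cont_bdd:
  fixes h :: "'a::euclidean_space \<Rightarrow> 'b::real_normed_vector"
  assumes "continuous_on UNIV h" shows "\<exists>M. \<forall>z. norm z \<le> R \<longrightarrow> norm (h z) \<le> M"
proof -
  have "compact (h ` cball 0 R)" by (rule compact_continuous_image[OF continuous_on_subset[OF assms] compact_cball]) simp
  then obtain M where "\<forall>y\<in>h ` cball 0 R. norm y \<le> M" using compact_imp_bounded bounded_iff by metis
  thus ?thesis by (intro exI[of _ M]) (auto simp: mem_cball_0)
qed

lemma seq_comp: assumes "\<And>n. \<sigma> n \<ge> n" "X \<longlonglongrightarrow> l" shows "(\<lambda>n. X (\<sigma> n)) \<longlonglongrightarrow> l"
proof -
  have "filterlim \<sigma> sequentially sequentially"
    by (rule filterlim_at_top_mono[OF filterlim_ident]) (use assms in auto)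
  thus ?thesis using assms(2) by (rule filterlim_compose[rotated])
qed




locale scp =
  fixes f P1 P2 :: "'a::euclidean_space \<Rightarrow> real" and gradf :: "'a \<Rightarrow> 'a"
    and g :: "'m::finite \<Rightarrow> 'a \<Rightarrow> real" and gradg :: "'m \<Rightarrow> 'a \<Rightarrow> 'a"
    and c Lmin Lmax tau :: real
    and x :: "nat \<Rightarrow> 'a" and Lf :: "nat \<Rightarrow> real" and Lg :: "nat \<Rightarrow> real^'m"
    and xi :: "nat \<Rightarrow> 'a" and J :: "nat \<Rightarrow> nat" and TLf :: "nat \<Rightarrow> nat \<Rightarrow> real"
    and TLg :: "nat \<Rightarrow> nat \<Rightarrow> real^'m" and Tx :: "nat \<Rightarrow> nat \<Rightarrow> 'a"
    and Lfl :: real and Lgl :: "'m \<Rightarrow> real" and Gam :: "'a set" and gP2 :: "'a \<Rightarrow> 'a"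
    and H :: "'m \<Rightarrow> 'a \<Rightarrow> 'a \<Rightarrow>\<^sub>L 'a"
  assumes df: "\<And>z. (f has_derivative (\<lambda>h. gradf z \<bullet> h)) (at z)"
    and ctgf: "continuous_on UNIV gradf"
    and cvP1: "convex_on UNIV P1" and ctP1: "continuous_on UNIV P1"
    and cvP2: "convex_on UNIV P2" and ctP2: "continuous_on UNIV P2"
    and ctg: "\<And>i. continuous_on UNIV (g i)"
    and Lfl: "Lfl \<ge> 0" "\<And>y z. norm (gradf y - gradf z) \<le> Lfl * norm (y - z)"
    and dg: "\<And>i z. (g i has_derivative (\<lambda>h. gradg i z \<bullet> h)) (at z)"
    and Lgl: "\<And>i. Lgl i \<ge> 0" "\<And>i y z. norm (gradg i y - gradg i z) \<le> Lgl i * norm (y - z)"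
    and lvl: "\<And>\<alpha>. bounded {z. Fobj f P1 P2 g z \<le> ereal \<alpha>}"
    and ctgg: "\<And>i. continuous_on UNIV (gradg i)"
    and mfcq: "\<And>z. feas g z \<Longrightarrow> \<exists>d. \<forall>i. g i z = 0 \<longrightarrow> gradg i z \<bullet> d < 0"
    and dH: "\<And>i z. (gradg i has_derivative blinfun_apply (H i z)) (at z)"
    and ctH: "\<And>i. continuous_on UNIV (H i)"
    and Gam_open: "open Gam"
    and Gam_stat: "\<And>z. stationary f gradf P1 P2 g gradg z \<Longrightarrow> z \<in> Gam"
    and dP2: "\<And>z. z \<in> Gam \<Longrightarrow> (P2 has_derivative (\<lambda>h. gP2 z \<bullet> h)) (at z)"
    and lipP2: "\<And>z. z \<in> Gam \<Longrightarrow> \<exists>e>0. \<exists>K. \<forall>y\<in>ball z e \<inter> Gam. \<forall>w\<in>ball z e \<inter> Gam. norm (gP2 y - gP2 w) \<le> K * norm (y - w)"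
    and c: "c > 0" and Lmin: "0 < Lmin" "Lmin < Lmax" and tau: "tau > 1"
    and x0: "feas g (x 0)"
    and alg: "\<And>t. xi t \<in> lsubdiff P2 (x t) \<and>
           Lmin \<le> TLf t 0 \<and> TLf t 0 \<le> Lmax \<and>
           (\<forall>i. Lmin \<le> TLg t 0 $ i \<and> TLg t 0 $ i \<le> Lmax) \<and>
           (\<forall>j\<le>J t. solves_sub gradf P1 g gradg (x t) (xi t) (TLf t j) (TLg t j) (Tx t j)) \<and>
           (\<forall>j<J t. \<not> accept f P1 P2 g c (x t) (Tx t j) \<and>
               (if \<not> feas g (Tx t j)
                then TLg t (Suc j) = tau *\<^sub>R TLg t j \<and> TLf t (Suc j) = TLf t j
                else TLf t (Suc j) = tau * TLf t j \<and> TLg t (Suc j) = TLg t j)) \<and>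
           accept f P1 P2 g c (x t) (Tx t (J t)) \<and>
           x (Suc t) = Tx t (J t) \<and> Lf t = TLf t (J t) \<and> Lg t = TLg t (J t)"
begin

definition phi where "phi z = f z + P1 z - P2 z"

lemma solves: "solves_sub gradf P1 g gradg (x t) (xi t) (Lf t) (Lg t) (x (Suc t))"
  using alg[of t] by auto
lemma acc: "accept f P1 P2 g c (x t) (x (Suc t))" using alg[of t] by auto
lemma feas_x: "feas g (x t)"
  by (cases t) (use x0 acc in \<open>auto simp: accept_def\<close>)
lemma dec: "phi (x (Suc t)) \<le> phi (x t) - c/2 * (norm (x (Suc t) - x t))\<^sup>2"
  using acc[of t] by (simp add: accept_def phi_def)
lemma xi_sg: "P2 (x t) + xi t \<bullet> (z - x t) \<le> P2 z"
  using lsub_convex_sg[OF cvP2 ctP2] alg[of t] by auto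

lemma Gbar_self: "Gbar g gradg y y w i = g i y" by (simp add: Gbar_def)

lemma feas_large:
  assumes s: "solves_sub gradf P1 g gradg y xx Lf' w z" and w: "\<And>i. w $ i \<ge> 2 * Lgl i"
  shows "feas g z"
proof -
  have "g i z \<le> 0" for i
  proof -
    have "g i z \<le> g i y + gradg i y \<bullet> (z - y) + Lgl i * (norm (z - y))\<^sup>2"
      by (rule descent[where F="g i" and Gr="gradg i", OF dg Lgl(2) Lgl(1)])
    also have "\<dots> \<le> Gbar g gradg z y w i"
    proof -
      have "Lgl i * (norm (z - y))\<^sup>2 \<le> w $ i / 2 * (norm (z - y))\<^sup>2" using w[of i] by (intro mult_right_mono) auto
      thus ?thesis by (simp add: Gbar_def)
    qed
    also have "\<dots> \<le> 0" using s by (simp add: solves_sub_def)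
    finally show ?thesis .
  qed
  thus ?thesis by (simp add: feas_def)
qed

lemma dec_large:
  assumes s: "solves_sub gradf P1 g gradg (x t) (xi t) Lf' w z" and L: "Lf' \<ge> 2 * Lfl + c"
  shows "phi z \<le> phi (x t) - c/2 * (norm (z - x t))\<^sup>2"
proof -
  let ?d = "z - x t"
  have fe: "\<forall>i. Gbar g gradg (x t) (x t) w i \<le> 0" using feas_x[of t] by (simp add: Gbar_self feas_def)
  have "sub_obj gradf P1 (x t) (xi t) Lf' z \<le> sub_obj gradf P1 (x t) (xi t) Lf' (x t)"
    using s fe by (simp add: solves_sub_def)
  hence 1: "gradf (x t) \<bullet> ?d - xi t \<bullet> ?d + Lf'/2 * (norm ?d)\<^sup>2 + P1 z \<le> P1 (x t)" by (simp add: sub_obj_def inner_diff_left)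
  have 2: "f z \<le> f (x t) + gradf (x t) \<bullet> ?d + Lfl * (norm ?d)\<^sup>2" by (rule descent[OF df Lfl(2) Lfl(1)])
  have 3: "P2 (x t) + xi t \<bullet> ?d \<le> P2 z" by (rule xi_sg)
  have 4: "Lfl * (norm ?d)\<^sup>2 - Lf'/2 * (norm ?d)\<^sup>2 \<le> - c/2 * (norm ?d)\<^sup>2"
  proof -
    have "(Lfl - Lf'/2) * (norm ?d)\<^sup>2 \<le> (- c/2) * (norm ?d)\<^sup>2" using L by (intro mult_right_mono) auto
    thus ?thesis by (simp add: algebra_simps)
  qed
  show ?thesis unfolding phi_def using 1 2 3 4 by linarith
qed

definition BF where "BF = max Lmax (tau * (2 * Lfl + c))"
definition MG where "MG = 2 * (\<Sum>i\<in>UNIV. Lgl i)"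
definition CG where "CG = max 1 (tau * MG / Lmin)"
definition BG where "BG = CG * Lmax"

lemma Lgl_le_MG: "2 * Lgl i \<le> MG"
  unfolding MG_def using member_le_sum[of i UNIV Lgl] Lgl(1) by auto

lemma trial: "j \<le> J t \<Longrightarrow> Lmin \<le> TLf t j \<and> TLf t j \<le> BF \<and> (\<exists>k. TLg t j = tau^k *\<^sub>R TLg t 0 \<and> tau^k \<le> CG)"
proof (induction j)
  case 0
  have "TLg t 0 = tau^0 *\<^sub>R TLg t 0 \<and> tau^0 \<le> CG" by (simp add: CG_def)
  hence "\<exists>k. TLg t 0 = tau^k *\<^sub>R TLg t 0 \<and> tau^k \<le> CG" by blast
  thus ?case using alg[of t] by (auto simp: BF_def)
next
  case (Suc j)
  hence jJ: "j < J t" and IH: "Lmin \<le> TLf t j \<and> TLf t j \<le> BF \<and> (\<exists>k. TLg t j = tau^k *\<^sub>R TLg t 0 \<and> tau^k \<le> CG)" by auto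
  obtain k where k: "TLg t j = tau^k *\<^sub>R TLg t 0" "tau^k \<le> CG" using IH by blast
  have na: "\<not> accept f P1 P2 g c (x t) (Tx t j)" and stp: "(if \<not> feas g (Tx t j) then TLg t (Suc j) = tau *\<^sub>R TLg t j \<and> TLf t (Suc j) = TLf t j else TLf t (Suc j) = tau * TLf t j \<and> TLg t (Suc j) = TLg t j)"
    using alg[of t] jJ by auto
  have sj: "solves_sub gradf P1 g gradg (x t) (xi t) (TLf t j) (TLg t j) (Tx t j)" using alg[of t] jJ by auto
  show ?case
  proof (cases "feas g (Tx t j)")
    case False
    with stp have e: "TLg t (Suc j) = tau *\<^sub>R TLg t j" "TLf t (Suc j) = TLf t j" by auto
    have "\<not> (\<forall>i. 2 * Lgl i \<le> TLg t j $ i)" using feas_large[OF sj] False by blast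
    then obtain i where i: "TLg t j $ i < 2 * Lgl i" by (auto simp: not_le)
    have "tau^k * Lmin \<le> tau^k * TLg t 0 $ i" using alg[of t] tau by (intro mult_left_mono) auto
    also have "\<dots> < 2 * Lgl i" using i k by simp
    also have "\<dots> \<le> MG" by (rule Lgl_le_MG)
    finally have "tau^k \<le> MG / Lmin" using Lmin by (simp add: field_simps)
    hence "tau * tau^k \<le> tau * (MG / Lmin)" using tau by (intro mult_left_mono) auto
    hence "tau^(Suc k) \<le> CG" by (simp add: CG_def)
    moreover have "TLg t (Suc j) = tau^(Suc k) *\<^sub>R TLg t 0" using e k by simp
    ultimately have "\<exists>k'. TLg t (Suc j) = tau^k' *\<^sub>R TLg t 0 \<and> tau^k' \<le> CG" by blast
    thus ?thesis using IH e by auto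
  next
    case True
    with stp have e: "TLf t (Suc j) = tau * TLf t j" "TLg t (Suc j) = TLg t j" by auto
    have "TLf t j < 2 * Lfl + c"
    proof (rule ccontr)
      assume "\<not> ?thesis"
      hence "phi (Tx t j) \<le> phi (x t) - c/2 * (norm (Tx t j - x t))\<^sup>2" by (intro dec_large[OF sj]) auto
      with True na show False by (simp add: accept_def phi_def)
    qed
    hence "tau * TLf t j \<le> tau * (2 * Lfl + c)" using tau by (intro mult_left_mono) auto
    hence "tau * TLf t j \<le> BF" by (simp add: BF_def)
    moreover have "TLf t j \<le> tau * TLf t j" using IH tau Lmin by (simp add: mult_le_cancel_right1)
    ultimately show ?thesis using e IH by auto
  qed
qed

lemma Lf_bd: "Lmin \<le> Lf t" "Lf t \<le> BF" using trial[of "J t" t] alg[of t] by auto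

lemma Lg_bd: "Lmin \<le> Lg t $ i" "Lg t $ i \<le> BG"
proof -
  obtain k where k: "Lg t = tau^k *\<^sub>R TLg t 0" "tau^k \<le> CG" using trial[of "J t" t] alg[of t] by auto
  have t1: "1 \<le> tau^k" using tau by simp
  have "1 * Lmin \<le> tau^k * TLg t 0 $ i" using t1 alg[of t] Lmin by (intro mult_mono) auto
  thus "Lmin \<le> Lg t $ i" using k by simp
  have tl: "Lmin \<le> TLg t 0 $ i" "TLg t 0 $ i \<le> Lmax" using alg[of t] by auto
  have "tau^k * TLg t 0 $ i \<le> CG * Lmax" using k tl t1 Lmin by (intro mult_mono) auto
  thus "Lg t $ i \<le> BG" using k by (simp add: BG_def)
qed

lemma BG_pos: "BG > 0" using Lg_bd[of 0 undefined] Lmin by linarith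

lemma Lg_norm: "norm (Lg t) \<le> of_nat CARD('m) * BG"
proof -
  have "norm (Lg t) \<le> (\<Sum>i\<in>UNIV. \<bar>Lg t $ i\<bar>)" by (rule norm_le_l1_cart)
  also have "\<dots> \<le> of_nat CARD('m) * BG"
  proof (intro sum_bounded_above)
    fix i show "\<bar>Lg t $ i\<bar> \<le> BG" using Lg_bd[of t i] Lmin by linarith
  qed
  finally show ?thesis .
qed

lemma phi_le0: "phi (x t) \<le> phi (x 0)"
proof (induction t)
  case (Suc t)
  have "0 \<le> c/2 * (norm (x (Suc t) - x t))\<^sup>2" using c by simp
  thus ?case using dec[of t] Suc by linarith
qed simp

definition R0 where "R0 = (SOME R. \<forall>t. norm (x t) \<le> R)"
lemma R0: "norm (x t) \<le> R0"
proof -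
  have "\<exists>R. \<forall>t. norm (x t) \<le> R"
  proof -
    obtain a where a: "\<forall>z\<in>{z. Fobj f P1 P2 g z \<le> ereal (phi (x 0))}. norm z \<le> a"
      using lvl bounded_iff by metis
    have "x t \<in> {z. Fobj f P1 P2 g z \<le> ereal (phi (x 0))}" for t
      using feas_x[of t] phi_le0[of t] by (simp add: Fobj_def phi_def)
    thus ?thesis using a by blast
  qed
  thus ?thesis unfolding R0_def by (rule someI_ex[where P="\<lambda>R. \<forall>t. norm (x t) \<le> R", THEN spec])
qed
lemma R0_nn: "R0 \<ge> 0" using R0[of 0] norm_ge_zero order_trans by blast

lemma ctf: "continuous_on UNIV f"
  by (rule continuous_at_imp_continuous_on) (use df has_derivative_continuous in blast)
lemma ctphi: "continuous_on UNIV phi"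
  unfolding phi_def[abs_def] by (intro continuous_intros ctf ctP1 ctP2)

definition Mphi where "Mphi = (SOME M. \<forall>z. norm z \<le> R0 \<longrightarrow> norm (phi z) \<le> M)"
lemma Mphi: "norm z \<le> R0 \<Longrightarrow> norm (phi z) \<le> Mphi"
  using someI_ex[OF cont_bdd[OF ctphi, of R0]] unfolding Mphi_def by blast

lemma dlim: "(\<lambda>t. x (Suc t) - x t) \<longlonglongrightarrow> 0"
proof -
  let ?a = "\<lambda>t. c/2 * (norm (x (Suc t) - x t))\<^sup>2"
  have "summable ?a"
  proof (rule summableI_nonneg_bounded)
    show "0 \<le> ?a n" for n using c by simp
    show "(\<Sum>i<n. ?a i) \<le> phi (x 0) + Mphi" for n
    proof -
      have "?a i \<le> phi (x i) - phi (x (Suc i))" for i using dec[of i] by linarith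
      hence "(\<Sum>i<n. ?a i) \<le> (\<Sum>i<n. phi (x i) - phi (x (Suc i)))"
        by (intro sum_mono)
      also have "\<dots> = phi (x 0) - phi (x n)" by (rule sum_lessThan_telescope')
      also have "\<dots> \<le> phi (x 0) + Mphi" using Mphi[OF R0[of n]] by (simp add: abs_le_iff)
      finally show ?thesis .
    qed
  qed
  hence "?a \<longlonglongrightarrow> 0" by (rule summable_LIMSEQ_zero)
  hence "(\<lambda>t. (2/c) * ?a t) \<longlonglongrightarrow> (2/c) * 0" by (intro tendsto_mult tendsto_const)
  hence "(\<lambda>t. (norm (x (Suc t) - x t))\<^sup>2) \<longlonglongrightarrow> 0" using c by simp
  hence "(\<lambda>t. sqrt ((norm (x (Suc t) - x t))\<^sup>2)) \<longlonglongrightarrow> sqrt 0" by (intro tendsto_intros)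
  hence "(\<lambda>t. norm (x (Suc t) - x t)) \<longlonglongrightarrow> 0" by simp
  thus ?thesis by (simp add: tendsto_norm_zero_iff)
qed

lemma slater: "\<exists>z. \<forall>i. Gbar g gradg z (x t) (Lg t) i < 0"
proof -
  obtain d where d: "\<And>i. g i (x t) = 0 \<Longrightarrow> gradg i (x t) \<bullet> d < 0" using mfcq[OF feas_x[of t]] by blast
  have "\<exists>b>0. \<forall>s. 0 < s \<and> s < b \<longrightarrow> g i (x t) + s * (gradg i (x t) \<bullet> d) + s\<^sup>2 * (Lg t $ i / 2 * (norm d)\<^sup>2) < 0" for i
  proof (rule quad_neg)
    show "g i (x t) \<le> 0" using feas_x[of t] by (simp add: feas_def)
    show "0 \<le> Lg t $ i / 2 * (norm d)\<^sup>2" using Lg_bd(1)[of t i] Lmin by simp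
    show "g i (x t) = 0 \<Longrightarrow> gradg i (x t) \<bullet> d < 0" by (rule d)
  qed
  then obtain bb where bb: "\<And>i. bb i > 0" "\<And>i s. 0 < s \<Longrightarrow> s < bb i \<Longrightarrow> g i (x t) + s * (gradg i (x t) \<bullet> d) + s\<^sup>2 * (Lg t $ i / 2 * (norm d)\<^sup>2) < 0"
    by metis
  define b where "b = Min (range bb)"
  have b: "b > 0" unfolding b_def using bb(1) by (subst Min_gr_iff) auto
  have bl: "b \<le> bb i" for i unfolding b_def by (rule Min_le) auto
  define s where "s = b / 2"
  have "Gbar g gradg (x t + s *\<^sub>R d) (x t) (Lg t) i < 0" for i
  proof -
    have s: "0 < s" "s < bb i" using b bl[of i] by (auto simp: s_def)
    have "Gbar g gradg (x t + s *\<^sub>R d) (x t) (Lg t) i = g i (x t) + s * (gradg i (x t) \<bullet> d) + s\<^sup>2 * (Lg t $ i / 2 * (norm d)\<^sup>2)"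
      by (simp add: Gbar_def power_mult_distrib)
    with bb(2)[OF s] show ?thesis by simp
  qed
  thus ?thesis by blast
qed

definition KKTt where "KKTt t l \<longleftrightarrow> (\<forall>i. 0 \<le> l$i \<and> l$i * Gbar g gradg (x (Suc t)) (x t) (Lg t) i = 0) \<and>
   (\<forall>z. sub_obj gradf P1 (x t) (xi t) (Lf t) (x (Suc t)) \<le> sub_obj gradf P1 (x t) (xi t) (Lf t) z + (\<Sum>i\<in>UNIV. l$i * Gbar g gradg z (x t) (Lg t) i))"

lemma kkt_t: "\<exists>l. KKTt t l"
proof -
  obtain zs where zs: "\<And>i. Gbar g gradg zs (x t) (Lg t) i < 0" using slater by blast
  have c1: "convex_on UNIV (sub_obj gradf P1 (x t) (xi t) (Lf t))"
    by (rule convex_sub_obj[OF _ cvP1]) (use Lf_bd(1)[of t] Lmin in linarith)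
  have c2: "convex_on UNIV (\<lambda>z. Gbar g gradg z (x t) (Lg t) i)" for i
    by (rule convex_Gbar) (use Lg_bd(1)[of t i] Lmin in linarith)
  have f0: "Gbar g gradg (x (Suc t)) (x t) (Lg t) i \<le> 0" for i using solves[of t] by (simp add: solves_sub_def)
  have opt: "\<forall>i. Gbar g gradg z (x t) (Lg t) i \<le> 0 \<Longrightarrow> sub_obj gradf P1 (x t) (xi t) (Lf t) (x (Suc t)) \<le> sub_obj gradf P1 (x t) (xi t) (Lf t) z" for z
    using solves[of t] by (simp add: solves_sub_def)
  show ?thesis unfolding KKTt_def by (rule kkt[OF c1 c2 f0 opt zs])
qed

definition lam where "lam t = (SOME l. KKTt t l)"
lemma lamK: "KKTt t (lam t)" unfolding lam_def by (rule someI_ex[OF kkt_t])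
lemma lam_nn: "0 \<le> lam t $ i" using lamK[of t] by (simp add: KKTt_def)
lemma lam_cs: "lam t $ i * Gbar g gradg (x (Suc t)) (x t) (Lg t) i = 0" using lamK[of t] by (simp add: KKTt_def)
lemma lam_lag: "sub_obj gradf P1 (x t) (xi t) (Lf t) (x (Suc t)) \<le> sub_obj gradf P1 (x t) (xi t) (Lf t) z + (\<Sum>i\<in>UNIV. lam t $ i * Gbar g gradg z (x t) (Lg t) i)"
  using lamK[of t] by (simp add: KKTt_def)

definition MP2 where "MP2 = (SOME M. \<forall>z. norm z \<le> R0 + 1 \<longrightarrow> norm (P2 z) \<le> M)"
lemma MP2: "norm z \<le> R0 + 1 \<Longrightarrow> norm (P2 z) \<le> MP2"
  using someI_ex[OF cont_bdd[OF ctP2, of "R0 + 1"]] unfolding MP2_def by blast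

lemma xi_bd: "norm (xi t) \<le> 2 * MP2"
proof (cases "xi t = 0")
  case True
  have "norm (P2 (x t)) \<le> MP2" using R0[of t] by (intro MP2) simp
  thus ?thesis using True by simp
next
  case False
  define u where "u = (1 / norm (xi t)) *\<^sub>R xi t"
  have nu: "norm u = 1" using False by (simp add: u_def)
  have xu: "xi t \<bullet> u = norm (xi t)" using False by (simp add: u_def dot_square_norm power2_eq_square)
  have "P2 (x t) + xi t \<bullet> ((x t + u) - x t) \<le> P2 (x t + u)" by (rule xi_sg)
  hence "norm (xi t) \<le> P2 (x t + u) - P2 (x t)" using xu by simp
  also have "\<dots> \<le> norm (P2 (x t + u)) + norm (P2 (x t))" by simp
  also have "\<dots> \<le> MP2 + MP2"
  proof (intro add_mono MP2)
    show "norm (x t + u) \<le> R0 + 1" using norm_triangle_ineq[of "x t" u] R0[of t] nu by linarith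
    show "norm (x t) \<le> R0 + 1" using R0[of t] by simp
  qed
  finally show ?thesis by simp
qed

definition MHi where "MHi i = (SOME M. \<forall>z. norm z \<le> R0 \<longrightarrow> norm (H i z) \<le> M)"
definition MH where "MH = (\<Sum>i\<in>UNIV. MHi i)"
lemma MHi: "norm z \<le> R0 \<Longrightarrow> norm (H i z) \<le> MHi i"
  using someI_ex[OF cont_bdd[OF ctH, of R0]] unfolding MHi_def by blast
lemma H_bd: "norm (H i (x t)) \<le> MH"
proof -
  have nn: "0 \<le> MHi j" for j using MHi[OF R0[of 0], of j] norm_ge_zero order_trans by blast
  have "norm (H i (x t)) \<le> MHi i" by (rule MHi[OF R0])
  also have "\<dots> \<le> MH" unfolding MH_def using nn by (intro member_le_sum) auto
  finally show ?thesis .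
qed
lemma MH_nn: "0 \<le> MH" using H_bd[of undefined 0] norm_ge_zero order_trans by blast

lemma Gbar_tendsto:
  assumes "(X \<longlongrightarrow> a) F" "(Y \<longlongrightarrow> b) F" "(W \<longlongrightarrow> w) F"
  shows "((\<lambda>n. Gbar g gradg (X n) (Y n) (W n) i) \<longlongrightarrow> Gbar g gradg a b w i) F"
  unfolding Gbar_def by (intro tendsto_intros ctc[OF ctg] ctc[OF ctgg] assms) auto

lemma sub_obj_tendsto:
  assumes "(X \<longlongrightarrow> a) F" "(V \<longlongrightarrow> v) F" "(L \<longlongrightarrow> l) F" "(Z \<longlongrightarrow> z) F"
  shows "((\<lambda>n. sub_obj gradf P1 (X n) (V n) (L n) (Z n)) \<longlongrightarrow> sub_obj gradf P1 a v l z) F"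
  unfolding sub_obj_def by (intro tendsto_intros ctc[OF ctgf] ctc[OF ctP1] assms) auto

lemma xSuc_lim: assumes "\<And>n. \<sigma> n \<ge> n" "(\<lambda>n. x (\<sigma> n)) \<longlonglongrightarrow> xs" shows "(\<lambda>n. x (Suc (\<sigma> n))) \<longlonglongrightarrow> xs"
proof -
  have "(\<lambda>n. x (\<sigma> n) + (x (Suc (\<sigma> n)) - x (\<sigma> n))) \<longlonglongrightarrow> xs + 0"
    by (intro tendsto_intros assms(2) seq_comp[OF assms(1) dlim])
  thus ?thesis by simp
qed

lemma feas_lim: assumes "X \<longlonglongrightarrow> xs" "\<And>n. feas g (X n)" shows "feas g xs"
  unfolding feas_def
proof
  fix i
  have "(\<lambda>n. g i (X n)) \<longlonglongrightarrow> g i xs" by (rule ctc[OF ctg assms(1)])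
  thus "g i xs \<le> 0" using assms(2) by (intro LIMSEQ_le_const2) (auto simp: feas_def)
qed

lemma norm5: "norm (q1, (q2, (q3, (q4, q5)))) \<le> norm q1 + norm q2 + norm q3 + norm q4 + norm q5"
  using norm_Pair_le[of q1 "(q2,(q3,(q4,q5)))"] norm_Pair_le[of q2 "(q3,(q4,q5))"] norm_Pair_le[of q3 "(q4,q5)"] norm_Pair_le[of q4 q5] by linarith
lemma norm4: "norm (q2, (q3, (q4, q5))) \<le> norm q2 + norm q3 + norm q4 + norm q5"
  using norm_Pair_le[of q2 "(q3,(q4,q5))"] norm_Pair_le[of q3 "(q4,q5)"] norm_Pair_le[of q4 q5] by linarith

lemma Lf_norm: "norm (Lf t) \<le> BF" using Lf_bd[of t] Lmin by simp

lemma lam_bdd: "\<exists>B T. \<forall>t\<ge>T. norm (lam t) \<le> B"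
proof (rule ccontr)
  assume na: "\<not> ?thesis"
  have "\<exists>t\<ge>n. norm (lam t) > real n" for n
  proof (rule ccontr)
    assume "\<not> (\<exists>t\<ge>n. norm (lam t) > real n)"
    hence "\<forall>t\<ge>n. norm (lam t) \<le> real n" by (auto simp: not_less)
    with na show False by blast
  qed
  then obtain \<sigma> where sg: "\<And>n. \<sigma> n \<ge> n" "\<And>n. norm (lam (\<sigma> n)) > real n" by metis
  define N where "N n = norm (lam (\<sigma> n))" for n
  have Npos: "N n > 0" for n using sg(2)[of n] of_nat_0_le_iff[of n] unfolding N_def by linarith
  define mu where "mu n = inverse (N n) *\<^sub>R lam (\<sigma> n)" for n
  have mun: "norm (mu n) = 1" for n using Npos[of n] by (simp add: mu_def N_def)
  have mui: "mu n $ i = lam (\<sigma> n) $ i / N n" for n i by (simp add: mu_def divide_inverse mult.commute)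
  define Z where "Z n = (x (\<sigma> n), (Lg (\<sigma> n), (Lf (\<sigma> n), (xi (\<sigma> n), mu n))))" for n
  have "bounded (range Z)"
  proof -
    have "norm (Z n) \<le> R0 + of_nat CARD('m) * BG + BF + 2 * MP2 + 1" for n
      using norm5[of "x (\<sigma> n)" "Lg (\<sigma> n)" "Lf (\<sigma> n)" "xi (\<sigma> n)" "mu n"] R0[of "\<sigma> n"] Lg_norm[of "\<sigma> n"]
        Lf_norm[of "\<sigma> n"] xi_bd[of "\<sigma> n"] mun[of n] unfolding Z_def by linarith
    thus ?thesis unfolding bounded_iff by blast
  qed
  then obtain l r where r: "strict_mono r" and lim: "(Z \<circ> r) \<longlonglongrightarrow> l" using bounded_imp_convergent_subsequence by blast
  define xs where "xs = fst l" define ws where "ws = fst (snd l)" define Ls where "Ls = fst (snd (snd l))"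
  define vs where "vs = fst (snd (snd (snd l)))" define ms where "ms = snd (snd (snd (snd l)))"
  define tt where "tt n = \<sigma> (r n)" for n
  have tt: "tt n \<ge> n" for n using sg(1)[of "r n"] seq_suble[OF r, of n] by (simp add: tt_def)
  have lim': "(\<lambda>n. Z (r n)) \<longlonglongrightarrow> l" using lim by (simp add: o_def)
  have Xl: "(\<lambda>n. x (tt n)) \<longlonglongrightarrow> xs" using tendsto_fst[OF lim'] by (simp add: Z_def tt_def xs_def)
  have Wl: "(\<lambda>n. Lg (tt n)) \<longlonglongrightarrow> ws" using tendsto_fst[OF tendsto_snd[OF lim']] by (simp add: Z_def tt_def ws_def)
  have Ll: "(\<lambda>n. Lf (tt n)) \<longlonglongrightarrow> Ls" using tendsto_fst[OF tendsto_snd[OF tendsto_snd[OF lim']]] by (simp add: Z_def tt_def Ls_def)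
  have Vl: "(\<lambda>n. xi (tt n)) \<longlonglongrightarrow> vs" using tendsto_fst[OF tendsto_snd[OF tendsto_snd[OF tendsto_snd[OF lim']]]] by (simp add: Z_def tt_def vs_def)
  have Ml: "(\<lambda>n. mu (r n)) \<longlonglongrightarrow> ms" using tendsto_snd[OF tendsto_snd[OF tendsto_snd[OF tendsto_snd[OF lim']]]] by (simp add: Z_def tt_def ms_def)
  have X1: "(\<lambda>n. x (Suc (tt n))) \<longlonglongrightarrow> xs" by (rule xSuc_lim[OF tt Xl])
  have fxs: "feas g xs" by (rule feas_lim[OF Xl feas_x])
  have msnn: "0 \<le> ms $ i" for i
  proof (rule LIMSEQ_le_const[OF tendsto_vec_nth[OF Ml]])
    have "0 \<le> mu (r n) $ i" for n using lam_nn[of "\<sigma> (r n)" i] Npos[of "r n"] by (simp add: mui)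
    thus "\<exists>N. \<forall>n\<ge>N. 0 \<le> mu (r n) $ i" by blast
  qed
  have msn: "norm ms = 1"
  proof -
    have "(\<lambda>n. norm (mu (r n))) \<longlonglongrightarrow> norm ms" by (rule tendsto_norm[OF Ml])
    moreover have "(\<lambda>n. norm (mu (r n))) \<longlonglongrightarrow> 1" by (simp add: mun)
    ultimately show ?thesis by (rule LIMSEQ_unique)
  qed
  have mscs: "ms $ i * g i xs = 0" for i
  proof -
    have "(\<lambda>n. mu (r n) $ i * Gbar g gradg (x (Suc (tt n))) (x (tt n)) (Lg (tt n)) i) \<longlonglongrightarrow> ms $ i * Gbar g gradg xs xs ws i"
      by (intro tendsto_intros Ml Gbar_tendsto X1 Xl Wl)
    moreover have "mu (r n) $ i * Gbar g gradg (x (Suc (tt n))) (x (tt n)) (Lg (tt n)) i = 0" for n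
      using lam_cs[of "tt n" i] by (simp add: mui tt_def)
    ultimately show ?thesis by (simp add: Gbar_self LIMSEQ_const_iff)
  qed
  have invl: "(\<lambda>n. inverse (N (r n))) \<longlonglongrightarrow> 0"
  proof (rule tendsto_inverse_0_at_top)
    show "filterlim (\<lambda>n. N (r n)) at_top sequentially"
    proof (rule filterlim_at_top_mono[OF filterlim_real_sequentially])
      show "\<forall>\<^sub>F n in sequentially. real n \<le> N (r n)"
        using sg(2) seq_suble[OF r] by (intro always_eventually allI) (smt (verit) N_def of_nat_le_iff)
    qed
  qed
  have ineq: "0 \<le> (\<Sum>i\<in>UNIV. ms $ i * Gbar g gradg z xs ws i)" for z
  proof -
    let ?S = "\<lambda>n. sub_obj gradf P1 (x (tt n)) (xi (tt n)) (Lf (tt n)) z - sub_obj gradf P1 (x (tt n)) (xi (tt n)) (Lf (tt n)) (x (Suc (tt n)))"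
    have "(\<lambda>n. inverse (N (r n)) * ?S n + (\<Sum>i\<in>UNIV. mu (r n) $ i * Gbar g gradg z (x (tt n)) (Lg (tt n)) i))
       \<longlonglongrightarrow> 0 * (sub_obj gradf P1 xs vs Ls z - sub_obj gradf P1 xs vs Ls xs) + (\<Sum>i\<in>UNIV. ms $ i * Gbar g gradg z xs ws i)"
      by (intro tendsto_intros invl sub_obj_tendsto Xl Vl Ll X1 Ml Gbar_tendsto Wl)
    moreover have "0 \<le> inverse (N (r n)) * ?S n + (\<Sum>i\<in>UNIV. mu (r n) $ i * Gbar g gradg z (x (tt n)) (Lg (tt n)) i)" for n
    proof -
      have "0 \<le> ?S n + (\<Sum>i\<in>UNIV. lam (tt n) $ i * Gbar g gradg z (x (tt n)) (Lg (tt n)) i)"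
        using lam_lag[of "tt n" z] by simp
      hence "0 \<le> inverse (N (r n)) * (?S n + (\<Sum>i\<in>UNIV. lam (tt n) $ i * Gbar g gradg z (x (tt n)) (Lg (tt n)) i))"
        using Npos[of "r n"] by simp
      thus ?thesis by (simp add: mui tt_def distrib_left sum_distrib_left divide_inverse mult.commute mult.left_commute)
    qed
    ultimately show ?thesis by (intro LIMSEQ_le_const) auto
  qed
  obtain d where d: "\<And>i. g i xs = 0 \<Longrightarrow> gradg i xs \<bullet> d < 0" using mfcq[OF fxs] by blast
  define B where "B i = gradg i xs \<bullet> d" for i
  define C where "C i = ws $ i / 2 * (norm d)\<^sup>2" for i
  have "- (\<Sum>i\<in>UNIV. ms $ i * B i) \<le> 0"
  proof (rule le_eps)
    fix s :: real assume s: "s > 0"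
    have "0 \<le> (\<Sum>i\<in>UNIV. ms $ i * Gbar g gradg (xs + s *\<^sub>R d) xs ws i)" by (rule ineq)
    also have "\<dots> = (\<Sum>i\<in>UNIV. ms $ i * g i xs + s * (ms $ i * B i) + s\<^sup>2 * (ms $ i * C i))"
      by (intro sum.cong refl) (simp add: Gbar_def B_def C_def power_mult_distrib algebra_simps)
    also have "\<dots> = s * (\<Sum>i\<in>UNIV. ms $ i * B i) + s\<^sup>2 * (\<Sum>i\<in>UNIV. ms $ i * C i)"
      by (simp add: mscs sum.distrib sum_distrib_left)
    finally have "0 \<le> s * ((\<Sum>i\<in>UNIV. ms $ i * B i) + s * (\<Sum>i\<in>UNIV. ms $ i * C i))"
      by (simp add: power2_eq_square algebra_simps)
    hence "0 \<le> (\<Sum>i\<in>UNIV. ms $ i * B i) + s * (\<Sum>i\<in>UNIV. ms $ i * C i)" using s by (simp add: zero_le_mult_iff)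
    thus "- (\<Sum>i\<in>UNIV. ms $ i * B i) \<le> s * (\<Sum>i\<in>UNIV. ms $ i * C i)" by linarith
  qed
  moreover have "(\<Sum>i\<in>UNIV. ms $ i * B i) < 0"
  proof -
    have "ms \<noteq> 0" using msn by auto
    then obtain i where "ms $ i \<noteq> 0" by (auto simp: vec_eq_iff)
    hence mi: "ms $ i > 0" using msnn[of i] by simp
    have tm: "ms $ j * B j \<le> 0" for j
    proof (cases "ms $ j = 0")
      case False
      hence "ms $ j > 0" using msnn[of j] by simp
      hence "g j xs = 0" using mscs[of j] by simp
      hence "B j < 0" using d by (simp add: B_def)
      thus ?thesis using msnn[of j] by (simp add: mult_nonneg_nonpos)
    qed simp
    have "g i xs = 0" using mscs[of i] mi by simp
    hence "B i < 0" using d by (simp add: B_def)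
    hence ti: "ms $ i * B i < 0" using mi by (simp add: mult_pos_neg)
    have "(\<Sum>j\<in>UNIV. ms $ j * B j) = ms $ i * B i + (\<Sum>j\<in>UNIV - {i}. ms $ j * B j)" by (simp add: sum.remove)
    also have "(\<Sum>j\<in>UNIV - {i}. ms $ j * B j) \<le> 0" using tm by (intro sum_nonpos) auto
    ultimately show ?thesis using ti by linarith
  qed
  ultimately show False by linarith
qed

lemma stat:
  assumes sg: "\<And>n. \<sigma> n \<ge> n" and lim: "(\<lambda>n. x (\<sigma> n)) \<longlonglongrightarrow> xs"
  shows "stationary f gradf P1 P2 g gradg xs"
proof -
  obtain BB T where BT: "\<And>t. t \<ge> T \<Longrightarrow> norm (lam t) \<le> BB" using lam_bdd by blast
  define \<rho> where "\<rho> n = \<sigma> (n + T)" for n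
  have rho: "\<rho> n \<ge> n" "\<rho> n \<ge> T" for n using sg[of "n+T"] by (auto simp: \<rho>_def)
  have limr: "(\<lambda>n. x (\<rho> n)) \<longlonglongrightarrow> xs" unfolding \<rho>_def using LIMSEQ_ignore_initial_segment[OF lim, of T] by simp
  define Z where "Z n = (Lg (\<rho> n), (Lf (\<rho> n), (xi (\<rho> n), lam (\<rho> n))))" for n
  have "bounded (range Z)"
  proof -
    have "norm (Z n) \<le> of_nat CARD('m) * BG + BF + 2 * MP2 + BB" for n
      using norm4[of "Lg (\<rho> n)" "Lf (\<rho> n)" "xi (\<rho> n)" "lam (\<rho> n)"] Lg_norm[of "\<rho> n"]
        Lf_norm[of "\<rho> n"] xi_bd[of "\<rho> n"] BT[OF rho(2)[of n]] unfolding Z_def by linarith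
    thus ?thesis unfolding bounded_iff by blast
  qed
  then obtain l r where r: "strict_mono r" and lim: "(Z \<circ> r) \<longlonglongrightarrow> l" using bounded_imp_convergent_subsequence by blast
  define ws where "ws = fst l" define Ls where "Ls = fst (snd l)"
  define vs where "vs = fst (snd (snd l))" define ls where "ls = snd (snd (snd l))"
  define tt where "tt n = \<rho> (r n)" for n
  have tt: "tt n \<ge> n" for n using rho(1)[of "r n"] seq_suble[OF r, of n] by (simp add: tt_def)
  have lim': "(\<lambda>n. Z (r n)) \<longlonglongrightarrow> l" using lim by (simp add: o_def)
  have Xl: "(\<lambda>n. x (tt n)) \<longlonglongrightarrow> xs" using LIMSEQ_subseq_LIMSEQ[OF limr r] by (simp add: o_def tt_def)
  have Wl: "(\<lambda>n. Lg (tt n)) \<longlonglongrightarrow> ws" using tendsto_fst[OF lim'] by (simp add: Z_def tt_def ws_def)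
  have Ll: "(\<lambda>n. Lf (tt n)) \<longlonglongrightarrow> Ls" using tendsto_fst[OF tendsto_snd[OF lim']] by (simp add: Z_def tt_def Ls_def)
  have Vl: "(\<lambda>n. xi (tt n)) \<longlonglongrightarrow> vs" using tendsto_fst[OF tendsto_snd[OF tendsto_snd[OF lim']]] by (simp add: Z_def tt_def vs_def)
  have Ml: "(\<lambda>n. lam (tt n)) \<longlonglongrightarrow> ls" using tendsto_snd[OF tendsto_snd[OF tendsto_snd[OF lim']]] by (simp add: Z_def tt_def ls_def)
  have X1: "(\<lambda>n. x (Suc (tt n))) \<longlonglongrightarrow> xs" by (rule xSuc_lim[OF tt Xl])
  have fxs: "feas g xs" by (rule feas_lim[OF Xl feas_x])
  have lsnn: "0 \<le> ls $ i" for i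
    by (rule LIMSEQ_le_const[OF tendsto_vec_nth[OF Ml]]) (use lam_nn in blast)
  have Lsp: "Lmin \<le> Ls" by (rule LIMSEQ_le_const[OF Ll]) (use Lf_bd in blast)
  have wsp: "Lmin \<le> ws $ i" for i by (rule LIMSEQ_le_const[OF tendsto_vec_nth[OF Wl]]) (use Lg_bd in blast)
  have lscs: "ls $ i * g i xs = 0" for i
  proof -
    have "(\<lambda>n. lam (tt n) $ i * Gbar g gradg (x (Suc (tt n))) (x (tt n)) (Lg (tt n)) i) \<longlonglongrightarrow> ls $ i * Gbar g gradg xs xs ws i"
      by (intro tendsto_intros Ml Gbar_tendsto X1 Xl Wl)
    thus ?thesis by (simp add: Gbar_self lam_cs LIMSEQ_const_iff)
  qed
  have vsg: "P2 xs + vs \<bullet> (z - xs) \<le> P2 z" for z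
  proof -
    have "(\<lambda>n. P2 (x (tt n)) + xi (tt n) \<bullet> (z - x (tt n))) \<longlonglongrightarrow> P2 xs + vs \<bullet> (z - xs)"
      by (intro tendsto_intros ctc[OF ctP2] Xl Vl)
    thus ?thesis using xi_sg by (intro LIMSEQ_le_const2) auto
  qed
  have lagl: "sub_obj gradf P1 xs vs Ls xs \<le> sub_obj gradf P1 xs vs Ls z + (\<Sum>i\<in>UNIV. ls $ i * Gbar g gradg z xs ws i)" for z
  proof -
    have "(\<lambda>n. sub_obj gradf P1 (x (tt n)) (xi (tt n)) (Lf (tt n)) z + (\<Sum>i\<in>UNIV. lam (tt n) $ i * Gbar g gradg z (x (tt n)) (Lg (tt n)) i)
        - sub_obj gradf P1 (x (tt n)) (xi (tt n)) (Lf (tt n)) (x (Suc (tt n))))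
       \<longlonglongrightarrow> sub_obj gradf P1 xs vs Ls z + (\<Sum>i\<in>UNIV. ls $ i * Gbar g gradg z xs ws i) - sub_obj gradf P1 xs vs Ls xs"
      by (intro tendsto_intros sub_obj_tendsto Xl Vl Ll X1 Ml Gbar_tendsto Wl)
    moreover have "\<forall>n. 0 \<le> sub_obj gradf P1 (x (tt n)) (xi (tt n)) (Lf (tt n)) z + (\<Sum>i\<in>UNIV. lam (tt n) $ i * Gbar g gradg z (x (tt n)) (Lg (tt n)) i)
        - sub_obj gradf P1 (x (tt n)) (xi (tt n)) (Lf (tt n)) (x (Suc (tt n)))" using lam_lag by (simp add: algebra_simps)
    ultimately have "0 \<le> sub_obj gradf P1 xs vs Ls z + (\<Sum>i\<in>UNIV. ls $ i * Gbar g gradg z xs ws i) - sub_obj gradf P1 xs vs Ls xs"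
      by (intro LIMSEQ_le_const) auto
    thus ?thesis by simp
  qed
  define gs where "gs = (\<Sum>i\<in>UNIV. ls $ i *\<^sub>R gradg i xs)"
  define K where "K = Ls / 2 + (\<Sum>i\<in>UNIV. ls $ i * (ws $ i / 2))"
  define u where "u = - (gradf xs - vs + gs)"
  have K0: "K \<ge> 0" unfolding K_def using Lsp Lmin lsnn wsp
    by (intro add_nonneg_nonneg sum_nonneg mult_nonneg_nonneg) (auto intro: order_trans[of 0 Lmin] less_imp_le)
  have P1ineq: "P1 xs + u \<bullet> (z - xs) - K * (norm (z - xs))\<^sup>2 \<le> P1 z" for z
  proof -
    have s1: "(\<Sum>i\<in>UNIV. ls $ i * Gbar g gradg z xs ws i) = (\<Sum>i\<in>UNIV. ls $ i * g i xs) + (\<Sum>i\<in>UNIV. ls $ i * (gradg i xs \<bullet> (z - xs))) + (\<Sum>i\<in>UNIV. ls $ i * (ws $ i / 2 * (norm (z - xs))\<^sup>2))"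
      by (simp add: Gbar_def distrib_left sum.distrib)
    have s2: "(\<Sum>i\<in>UNIV. ls $ i * g i xs) = 0" by (simp add: lscs)
    have s3: "(\<Sum>i\<in>UNIV. ls $ i * (gradg i xs \<bullet> (z - xs))) = gs \<bullet> (z - xs)" by (simp add: gs_def inner_sum_left)
    have s4: "(\<Sum>i\<in>UNIV. ls $ i * (ws $ i / 2 * (norm (z - xs))\<^sup>2)) = (\<Sum>i\<in>UNIV. ls $ i * (ws $ i / 2)) * (norm (z - xs))\<^sup>2"
      by (simp add: sum_distrib_right mult.assoc)
    have "P1 xs \<le> (gradf xs - vs) \<bullet> (z - xs) + Ls / 2 * (norm (z - xs))\<^sup>2 + P1 z + (gs \<bullet> (z - xs) + (\<Sum>i\<in>UNIV. ls $ i * (ws $ i / 2)) * (norm (z - xs))\<^sup>2)"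
      using lagl[of z] s1 s2 s3 s4 by (simp add: sub_obj_def)
    thus ?thesis by (simp add: u_def K_def inner_add_left inner_diff_left algebra_simps)
  qed
  have uP1: "u \<in> lsubdiff P1 xs"
    unfolding lsubdiff_def
  proof (rule frechet_imp_lim, rule frechet_quad[where r=1 and K=K])
    show "ereal (P1 xs) + ereal (u \<bullet> (z - xs) - K * (norm (z - xs))\<^sup>2) \<le> ereal (P1 z)" for z using P1ineq[of z] by simp
  qed (use K0 in auto)
  have vP2: "vs \<in> lsubdiff P2 xs" unfolding lsubdiff_def by (intro frechet_imp_lim sg_frechet vsg)
  show ?thesis unfolding stationary_def
  proof (intro conjI exI[of _ "\<lambda>i. ls $ i"] bexI[OF _ uP1] bexI[OF _ vP2])
    show "feas g xs" by (rule fxs)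
    show "\<forall>i. 0 \<le> ls $ i \<and> ls $ i * g i xs = 0" using lsnn lscs by blast
    show "gradf xs + u - vs + (\<Sum>i\<in>UNIV. ls $ i *\<^sub>R gradg i xs) = 0" by (simp add: u_def gs_def)
  qed
qed

lemma acc_Gam:
  assumes sg: "\<And>n. \<sigma> n \<ge> n"
  shows "\<exists>r xs. strict_mono r \<and> (\<lambda>n. x (\<sigma> (r n))) \<longlonglongrightarrow> xs \<and> xs \<in> Gam"
proof -
  have "bounded (range (\<lambda>n. x (\<sigma> n)))" unfolding bounded_iff using R0 by blast
  then obtain l r where r: "strict_mono r" and lim: "((\<lambda>n. x (\<sigma> n)) \<circ> r) \<longlonglongrightarrow> l" using bounded_imp_convergent_subsequence by blast
  have lim': "(\<lambda>n. x (\<sigma> (r n))) \<longlonglongrightarrow> l" using lim by (simp add: o_def)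
  have "\<sigma> (r n) \<ge> n" for n using sg[of "r n"] seq_suble[OF r, of n] by simp
  hence "stationary f gradf P1 P2 g gradg l" using lim' by (rule stat)
  hence "l \<in> Gam" by (rule Gam_stat)
  thus ?thesis using r lim' by blast
qed

lemma ev_Gam: "\<exists>T. \<forall>t\<ge>T. x t \<in> Gam"
proof (rule ccontr)
  assume na: "\<not> ?thesis"
  have "\<exists>t\<ge>n. x t \<notin> Gam" for n using na by blast
  then obtain \<sigma> where sg: "\<And>n. \<sigma> n \<ge> n" "\<And>n. x (\<sigma> n) \<notin> Gam" by metis
  obtain r xs where r: "strict_mono r" and lim: "(\<lambda>n. x (\<sigma> (r n))) \<longlonglongrightarrow> xs" and xs: "xs \<in> Gam"
    using acc_Gam[OF sg(1)] by blast
  have "eventually (\<lambda>n. x (\<sigma> (r n)) \<in> Gam) sequentially" using topological_tendstoD[OF lim Gam_open xs] .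
  then obtain n where "x (\<sigma> (r n)) \<in> Gam" by (auto simp: eventually_sequentially)
  with sg(2) show False by blast
qed

lemma ev_lip0: "\<exists>K T. \<forall>t\<ge>T. norm (gP2 (x (Suc t)) - gP2 (x t)) \<le> K * norm (x (Suc t) - x t)"
proof (rule ccontr)
  assume na: "\<not> ?thesis"
  obtain T6 where T6: "\<And>t. t \<ge> T6 \<Longrightarrow> x t \<in> Gam" using ev_Gam by blast
  have "\<exists>t\<ge>max n T6. norm (gP2 (x (Suc t)) - gP2 (x t)) > real n * norm (x (Suc t) - x t)" for n
  proof (rule ccontr)
    assume "\<not> (\<exists>t\<ge>max n T6. norm (gP2 (x (Suc t)) - gP2 (x t)) > real n * norm (x (Suc t) - x t))"
    hence "\<forall>t\<ge>max n T6. norm (gP2 (x (Suc t)) - gP2 (x t)) \<le> real n * norm (x (Suc t) - x t)" by (auto simp: not_less)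
    thus False using na by blast
  qed
  then obtain \<sigma> where sg0: "\<And>n. \<sigma> n \<ge> max n T6"
     and fl: "\<And>n. norm (gP2 (x (Suc (\<sigma> n))) - gP2 (x (\<sigma> n))) > real n * norm (x (Suc (\<sigma> n)) - x (\<sigma> n))" by metis
  have sg: "\<sigma> n \<ge> n" for n using sg0[of n] by simp
  obtain r xs where r: "strict_mono r" and lim: "(\<lambda>n. x (\<sigma> (r n))) \<longlonglongrightarrow> xs" and xs: "xs \<in> Gam"
    using acc_Gam[OF sg] by blast
  obtain e K0 where e: "e > 0" and K0: "\<And>y w. y \<in> ball xs e \<inter> Gam \<Longrightarrow> w \<in> ball xs e \<inter> Gam \<Longrightarrow> norm (gP2 y - gP2 w) \<le> K0 * norm (y - w)"
    using lipP2[OF xs] by blast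
  have srn: "\<sigma> (r n) \<ge> n" for n using sg[of "r n"] seq_suble[OF r, of n] by simp
  have lim1: "(\<lambda>n. x (Suc (\<sigma> (r n)))) \<longlonglongrightarrow> xs" by (rule xSuc_lim[OF srn lim])
  have e1: "eventually (\<lambda>n. x (\<sigma> (r n)) \<in> ball xs e) sequentially"
    using topological_tendstoD[OF lim open_ball centre_in_ball[THEN iffD2, OF e]] .
  have e2: "eventually (\<lambda>n. x (Suc (\<sigma> (r n))) \<in> ball xs e) sequentially"
    using topological_tendstoD[OF lim1 open_ball centre_in_ball[THEN iffD2, OF e]] .
  have e3: "eventually (\<lambda>n. n \<ge> nat \<lceil>K0\<rceil>) sequentially" by (rule eventually_ge_at_top)
  have ev: "eventually (\<lambda>n. x (\<sigma> (r n)) \<in> ball xs e \<and> x (Suc (\<sigma> (r n))) \<in> ball xs e \<and> n \<ge> nat \<lceil>K0\<rceil>) sequentially"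
    using e1 e2 e3 by (intro eventually_conj)
  then obtain n where n: "x (\<sigma> (r n)) \<in> ball xs e" "x (Suc (\<sigma> (r n))) \<in> ball xs e" "n \<ge> nat \<lceil>K0\<rceil>"
    by (auto simp: eventually_sequentially)
  let ?t = "\<sigma> (r n)"
  have g1: "x ?t \<in> Gam" using T6 sg0[of "r n"] by simp
  have g2: "x (Suc ?t) \<in> Gam" using T6 sg0[of "r n"] by simp
  have "norm (gP2 (x (Suc ?t)) - gP2 (x ?t)) \<le> K0 * norm (x (Suc ?t) - x ?t)" using K0 n g1 g2 by blast
  moreover have "K0 \<le> real (r n)"
  proof -
    have "K0 \<le> real (nat \<lceil>K0\<rceil>)" by linarith
    also have "\<dots> \<le> real n" using n(3) by simp
    also have "\<dots> \<le> real (r n)" using seq_suble[OF r, of n] by simp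
    finally show ?thesis .
  qed
  hence "K0 * norm (x (Suc ?t) - x ?t) \<le> real (r n) * norm (x (Suc ?t) - x ?t)" by (intro mult_right_mono) auto
  ultimately show False using fl[of "r n"] by linarith
qed

lemma final_t:
  assumes G1: "x t \<in> Gam" and G2: "x (Suc t) \<in> Gam" and lb: "norm (lam t) \<le> B"
    and lip: "norm (gP2 (x (Suc t)) - gP2 (x t)) \<le> K * norm (x (Suc t) - x t)"
  shows "\<exists>v\<in>lim_subdiff (Fbar f P1 P2 g gradg) (x (Suc t), x t, Lg t).
           norm v \<le> (Lfl + K + BF + of_nat CARD('m) * (B * (MH + R0 + BG))) * norm (x (Suc t) - x t)"
proof -
  define a where "a = x (Suc t)" define y where "y = x t" define w where "w = Lg t" define l where "l = lam t"
  define d where "d = a - y"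
  define p :: "'a \<times> 'a \<times> (real^'m)" where "p = (a, y, w)"
  have xiy: "xi t = gP2 y" unfolding y_def by (rule sg_grad[OF xi_sg dP2[OF G1]])
  define R :: "'a \<times> 'a \<times> (real^'m) \<Rightarrow> real" where
    "R = (\<lambda>z. (\<Sum>i\<in>UNIV. l$i * (Gbar g gradg (fst z) (fst (snd z)) (snd (snd z)) i - Gbar g gradg (fst z) y w i)) + f (fst z) - P2 (fst z)
        - (gradf y - xi t) \<bullet> (fst z - y) - Lf t / 2 * ((fst z - y) \<bullet> (fst z - y)))"
  define DG where "DG i h = gradg i y \<bullet> fst (snd h) + (gradg i y \<bullet> (fst h - fst (snd h)) + H i y (fst (snd h)) \<bullet> (a - y))
        + (snd (snd h) $ i / 2 * ((a - y) \<bullet> (a - y)) + w $ i / 2 * ((a - y) \<bullet> (fst h - fst (snd h)) + (fst h - fst (snd h)) \<bullet> (a - y)))"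
    for i and h :: "'a \<times> 'a \<times> (real^'m)"
  define DGx where "DGx i h = gradg i y \<bullet> fst h + w $ i / 2 * ((a - y) \<bullet> fst h + fst h \<bullet> (a - y))" for i and h :: "'a \<times> 'a \<times> (real^'m)"
  define D0 where "D0 h = (\<Sum>i\<in>UNIV. l$i * (DG i h - DGx i h)) + gradf a \<bullet> fst h - gP2 a \<bullet> fst h
        - ((gradf y - xi t) \<bullet> fst h) - Lf t / 2 * ((a - y) \<bullet> fst h + fst h \<bullet> (a - y))" for h :: "'a \<times> 'a \<times> (real^'m)"
  have dfst: "(fst has_derivative fst) (at p)" by (rule bounded_linear_imp_has_derivative[OF bounded_linear_fst])
  have dxy: "((\<lambda>z. fst z - y) has_derivative fst) (at p)"
    using has_derivative_diff[OF dfst has_derivative_const[of y]] by simp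
  have dG: "((\<lambda>z. l$i * (Gbar g gradg (fst z) (fst (snd z)) (snd (snd z)) i - Gbar g gradg (fst z) y w i)) has_derivative (\<lambda>h. l$i * (DG i h - DGx i h))) (at p)" for i
    unfolding p_def DG_def[abs_def] DGx_def[abs_def]
    by (intro has_derivative_mult_right has_derivative_diff Gbar_deriv[OF dg dH] Gbar_deriv_x)
  have df': "((\<lambda>z. f (fst z)) has_derivative (\<lambda>h. gradf a \<bullet> fst h)) (at p)"
    using has_derivative_compose[OF dfst df[of "fst p"]] by (simp add: p_def)
  have dP': "((\<lambda>z. P2 (fst z)) has_derivative (\<lambda>h. gP2 a \<bullet> fst h)) (at p)"
  proof -
    have "fst p \<in> Gam" using G2 by (simp add: p_def a_def)
    from has_derivative_compose[OF dfst dP2[OF this]] show ?thesis by (simp add: p_def)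
  qed
  have dl: "((\<lambda>z. (gradf y - xi t) \<bullet> (fst z - y)) has_derivative (\<lambda>h. (gradf y - xi t) \<bullet> fst h)) (at p)"
    using has_derivative_inner[OF has_derivative_const dxy] by simp
  have dq: "((\<lambda>z. Lf t / 2 * ((fst z - y) \<bullet> (fst z - y))) has_derivative (\<lambda>h. Lf t / 2 * ((a - y) \<bullet> fst h + fst h \<bullet> (a - y)))) (at p)"
    using has_derivative_mult_right[OF has_derivative_inner[OF dxy dxy], of "Lf t / 2"] by (simp add: p_def)
  have dR: "(R has_derivative D0) (at p)"
    unfolding R_def D0_def[abs_def]
    by (intro has_derivative_diff has_derivative_add has_derivative_sum dG df' dP' dl dq)
  have lin: "linear D0" using has_derivative_bounded_linear[OF dR] bounded_linear.linear by blast
  have nd2: "norm d \<le> 2 * R0" using norm_triangle_ineq4[of a y] R0[of t] R0[of "Suc t"] by (simp add: d_def a_def y_def)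
  have B0: "0 \<le> B" using lb norm_ge_zero order_trans by blast
  have bd: "\<bar>D0 h\<bar> \<le> ((Lfl + K + BF + of_nat CARD('m) * (B * (MH + R0 + BG))) * norm d) * norm h" for h
  proof -
    define hx where "hx = fst h" define hy where "hy = fst (snd h)" define hw where "hw = snd (snd h)"
    have nhx: "norm hx \<le> norm h" unfolding hx_def by (metis norm_fst_le prod.collapse)
    have nsh: "norm (snd h) \<le> norm h" by (metis norm_snd_le prod.collapse)
    have nhy: "norm hy \<le> norm h" unfolding hy_def using nsh by (metis norm_fst_le prod.collapse order_trans)
    have nhw: "\<bar>hw $ i\<bar> \<le> norm h" for i unfolding hw_def using nsh component_le_norm_cart[of "snd (snd h)" i]
      by (metis norm_snd_le prod.collapse order_trans)
    define E where "E i = H i y hy \<bullet> d + hw $ i / 2 * (d \<bullet> d) - w $ i * (d \<bullet> hy)" for i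
    define V where "V = gradf a - gradf y - (gP2 a - gP2 y) - Lf t *\<^sub>R d"
    have eq: "D0 h = (\<Sum>i\<in>UNIV. l$i * E i) + V \<bullet> hx"
    proof -
      have "DG i h - DGx i h = E i" for i
        unfolding DG_def DGx_def E_def hx_def hy_def hw_def d_def
        by (simp add: inner_diff_left inner_diff_right inner_commute algebra_simps)
      thus ?thesis unfolding D0_def V_def xiy hx_def
        by (simp add: inner_diff_left inner_diff_right inner_commute d_def algebra_simps)
    qed
    have Eb: "\<bar>E i\<bar> \<le> (MH + R0 + BG) * (norm d * norm h)" for i
    proof -
      have 1: "\<bar>H i y hy \<bullet> d\<bar> \<le> MH * (norm d * norm h)"
      proof -
        have "\<bar>H i y hy \<bullet> d\<bar> \<le> norm (H i y hy) * norm d" by (rule Cauchy_Schwarz_ineq2)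
        also have "\<dots> \<le> (norm (H i y) * norm hy) * norm d" by (intro mult_right_mono norm_blinfun) auto
        also have "\<dots> \<le> (MH * norm h) * norm d" using H_bd[of i t] nhy MH_nn unfolding y_def
          by (intro mult_right_mono mult_mono) auto
        finally show ?thesis by (simp add: algebra_simps)
      qed
      have 2: "\<bar>hw $ i / 2 * (d \<bullet> d)\<bar> \<le> R0 * (norm d * norm h)"
      proof -
        have "\<bar>hw $ i / 2 * (d \<bullet> d)\<bar> = \<bar>hw $ i\<bar> / 2 * (norm d * norm d)" by (simp add: abs_mult dot_square_norm power2_eq_square)
        also have "\<dots> \<le> norm h / 2 * (2 * R0 * norm d)" using nhw[of i] nd2 R0_nn
          by (intro mult_mono mult_right_mono) auto
        finally show ?thesis by (simp add: algebra_simps)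
      qed
      have 3: "\<bar>w $ i * (d \<bullet> hy)\<bar> \<le> BG * (norm d * norm h)"
      proof -
        have "\<bar>w $ i * (d \<bullet> hy)\<bar> = \<bar>w $ i\<bar> * \<bar>d \<bullet> hy\<bar>" by (simp add: abs_mult)
        also have "\<dots> \<le> BG * (norm d * norm h)"
        proof (intro mult_mono)
          show "\<bar>w $ i\<bar> \<le> BG" using Lg_bd[of t i] Lmin unfolding w_def by linarith
          show "\<bar>d \<bullet> hy\<bar> \<le> norm d * norm h" using Cauchy_Schwarz_ineq2[of d hy] nhy
            by (meson mult_left_mono norm_ge_zero order_trans)
        qed (auto simp: BG_pos less_imp_le)
        finally show ?thesis .
      qed
      show ?thesis unfolding E_def using 1 2 3 by (simp add: algebra_simps)
    qed
    have S: "\<bar>\<Sum>i\<in>UNIV. l$i * E i\<bar> \<le> of_nat CARD('m) * (B * (MH + R0 + BG) * (norm d * norm h))"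
    proof -
      have "\<bar>\<Sum>i\<in>UNIV. l$i * E i\<bar> \<le> (\<Sum>i\<in>UNIV. \<bar>l$i * E i\<bar>)" by (rule sum_abs)
      also have "\<dots> \<le> of_nat CARD('m) * (B * (MH + R0 + BG) * (norm d * norm h))"
      proof (intro sum_bounded_above)
        fix i
        have "\<bar>l$i\<bar> \<le> B" using component_le_norm_cart[of l i] lb unfolding l_def by linarith
        hence "\<bar>l$i\<bar> * \<bar>E i\<bar> \<le> B * ((MH + R0 + BG) * (norm d * norm h))" using Eb[of i] B0 by (intro mult_mono) auto
        thus "\<bar>l$i * E i\<bar> \<le> B * (MH + R0 + BG) * (norm d * norm h)" by (simp add: abs_mult mult.assoc)
      qed
      finally show ?thesis by simp
    qed
    have Vb: "norm V \<le> (Lfl + K + BF) * norm d"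
    proof -
      have "norm V \<le> norm (gradf a - gradf y) + norm (gP2 a - gP2 y) + norm (Lf t *\<^sub>R d)"
        unfolding V_def using norm_triangle_ineq4[of "gradf a - gradf y - (gP2 a - gP2 y)" "Lf t *\<^sub>R d"]
          norm_triangle_ineq4[of "gradf a - gradf y" "gP2 a - gP2 y"] by linarith
      also have "\<dots> \<le> Lfl * norm d + K * norm d + BF * norm d"
      proof (intro add_mono)
        show "norm (gradf a - gradf y) \<le> Lfl * norm d" using Lfl(2) by (simp add: d_def)
        show "norm (gP2 a - gP2 y) \<le> K * norm d" using lip by (simp add: d_def a_def y_def)
        show "norm (Lf t *\<^sub>R d) \<le> BF * norm d" using Lf_bd[of t] Lmin by (simp add: mult_right_mono)
      qed
      finally show ?thesis by (simp add: algebra_simps)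
    qed
    have Vh: "\<bar>V \<bullet> hx\<bar> \<le> (Lfl + K + BF) * (norm d * norm h)"
    proof -
      have c0: "0 \<le> (Lfl + K + BF) * norm d" using Vb norm_ge_zero[of V] by linarith
      have "\<bar>V \<bullet> hx\<bar> \<le> norm V * norm hx" by (rule Cauchy_Schwarz_ineq2)
      also have "\<dots> \<le> ((Lfl + K + BF) * norm d) * norm h" using Vb nhx c0 by (intro mult_mono) auto
      finally show ?thesis by (simp add: algebra_simps)
    qed
    have "\<bar>D0 h\<bar> \<le> \<bar>\<Sum>i\<in>UNIV. l$i * E i\<bar> + \<bar>V \<bullet> hx\<bar>" unfolding eq by (rule abs_triangle_ineq)
    also have "\<dots> \<le> of_nat CARD('m) * (B * (MH + R0 + BG) * (norm d * norm h)) + (Lfl + K + BF) * (norm d * norm h)"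
      using S Vh by (rule add_mono)
    finally show ?thesis by (simp add: algebra_simps)
  qed
  obtain v where Dv: "\<And>h. D0 h = v \<bullet> h" and nv: "norm v \<le> (Lfl + K + BF + of_nat CARD('m) * (B * (MH + R0 + BG))) * norm d"
    using repr[OF lin bd] by blast
  have dRv: "(R has_derivative (\<lambda>h. v \<bullet> h)) (at p)" using dR by (simp add: Dv[abs_def])
  have fa: "\<forall>i. Gbar g gradg a y w i \<le> 0" using solves[of t] by (simp add: solves_sub_def a_def y_def w_def)
  have Fp: "Fbar f P1 P2 g gradg p = ereal (phi a)" using fa by (simp add: Fbar_def p_def phi_def)
  have Rp: "R p = f a - P2 a - (gradf y - xi t) \<bullet> (a - y) - Lf t / 2 * ((a - y) \<bullet> (a - y))"
    by (simp add: R_def p_def)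
  have le: "Fbar f P1 P2 g gradg p + ereal (R z - R p) \<le> Fbar f P1 P2 g gradg z" for z
  proof -
    obtain za zb zw where z: "z = (za, zb, zw)" by (cases z) auto
    show ?thesis
    proof (cases "\<forall>i. Gbar g gradg za zb zw i \<le> 0")
      case False
      hence "Fbar f P1 P2 g gradg z = \<infinity>" by (simp add: Fbar_def z)
      thus ?thesis by simp
    next
      case True
      have Fz: "Fbar f P1 P2 g gradg z = ereal (phi za)" using True by (simp add: Fbar_def z phi_def)
      have sn: "(\<Sum>i\<in>UNIV. l$i * Gbar g gradg za zb zw i) \<le> 0"
        using True lam_nn by (intro sum_nonpos) (simp add: l_def mult_nonneg_nonpos)
      have kk: "sub_obj gradf P1 y (xi t) (Lf t) a \<le> sub_obj gradf P1 y (xi t) (Lf t) za + (\<Sum>i\<in>UNIV. l$i * Gbar g gradg za y w i)"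
        using lam_lag[of t za] by (simp add: a_def y_def w_def l_def)
      have Rz: "R z = (\<Sum>i\<in>UNIV. l$i * Gbar g gradg za zb zw i) - (\<Sum>i\<in>UNIV. l$i * Gbar g gradg za y w i) + f za - P2 za
         - (gradf y - xi t) \<bullet> (za - y) - Lf t / 2 * ((za - y) \<bullet> (za - y))"
        by (simp add: R_def z right_diff_distrib sum_subtractf)
      have "phi a + (R z - R p) \<le> phi za"
        using kk sn unfolding Rz Rp by (simp add: phi_def sub_obj_def power2_norm_eq_inner)
      thus ?thesis using Fp Fz by simp
    qed
  qed
  have "v \<in> frechet_subdiff (Fbar f P1 P2 g gradg) p"
    by (rule frechet_of_deriv[OF _ dRv le]) (simp add: Fp)
  hence "v \<in> lim_subdiff (Fbar f P1 P2 g gradg) p" by (rule frechet_imp_lim)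
  thus ?thesis using nv unfolding p_def a_def y_def w_def d_def by blast
qed

lemma main_loc:
  "\<exists>\<kappa>>0. \<exists>t0::nat. t0 \<ge> 1 \<and>
           (\<forall>t>t0. lim_subdiff (Fbar f P1 P2 g gradg) (x (Suc t), x t, Lg t) \<noteq> {} \<and>
                   infdist 0 (lim_subdiff (Fbar f P1 P2 g gradg) (x (Suc t), x t, Lg t))
                     \<le> \<kappa> * norm (x (Suc t) - x t))"
proof -
  obtain B4 T4 where B4: "\<And>t. t \<ge> T4 \<Longrightarrow> norm (lam t) \<le> B4" using lam_bdd by blast
  obtain K7 T7 where K7: "\<And>t. t \<ge> T7 \<Longrightarrow> norm (gP2 (x (Suc t)) - gP2 (x t)) \<le> K7 * norm (x (Suc t) - x t)" using ev_lip0 by blast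
  obtain T6 where T6: "\<And>t. t \<ge> T6 \<Longrightarrow> x t \<in> Gam" using ev_Gam by blast
  define B where "B = \<bar>B4\<bar>" define K where "K = \<bar>K7\<bar>"
  define \<kappa> where "\<kappa> = Lfl + K + BF + of_nat CARD('m) * (B * (MH + R0 + BG))"
  define T where "T = max (max T4 T7) (max T6 1)"
  have BF0: "BF > 0" using Lmin by (simp add: BF_def)
  have k0: "\<kappa> > 0" unfolding \<kappa>_def B_def K_def using Lfl(1) BF0 MH_nn R0_nn BG_pos
    by (intro add_nonneg_pos add_pos_nonneg mult_nonneg_nonneg) auto
  have "\<forall>t>T. lim_subdiff (Fbar f P1 P2 g gradg) (x (Suc t), x t, Lg t) \<noteq> {} \<and>
                   infdist 0 (lim_subdiff (Fbar f P1 P2 g gradg) (x (Suc t), x t, Lg t)) \<le> \<kappa> * norm (x (Suc t) - x t)"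
  proof (intro allI impI)
    fix t assume t: "T < t"
    have lb: "norm (lam t) \<le> B" using B4[of t] t by (simp add: T_def B_def)
    have lip: "norm (gP2 (x (Suc t)) - gP2 (x t)) \<le> K * norm (x (Suc t) - x t)"
    proof -
      have "K7 * norm (x (Suc t) - x t) \<le> K * norm (x (Suc t) - x t)" unfolding K_def by (intro mult_right_mono) auto
      thus ?thesis using K7[of t] t by (simp add: T_def)
    qed
    obtain v where v: "v \<in> lim_subdiff (Fbar f P1 P2 g gradg) (x (Suc t), x t, Lg t)" and nv: "norm v \<le> \<kappa> * norm (x (Suc t) - x t)"
      using final_t[OF T6 T6 lb lip] t unfolding \<kappa>_def by (auto simp: T_def)
    have "infdist 0 (lim_subdiff (Fbar f P1 P2 g gradg) (x (Suc t), x t, Lg t)) \<le> dist 0 v" by (rule infdist_le[OF v])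
    thus "lim_subdiff (Fbar f P1 P2 g gradg) (x (Suc t), x t, Lg t) \<noteq> {} \<and>
                   infdist 0 (lim_subdiff (Fbar f P1 P2 g gradg) (x (Suc t), x t, Lg t)) \<le> \<kappa> * norm (x (Suc t) - x t)"
      using v nv by auto
  qed
  moreover have "T \<ge> 1" by (simp add: T_def)
  ultimately show ?thesis using k0 by blast
qed

end

theorem mainTheorem6:
  fixes f P1 P2 :: "'a::euclidean_space \<Rightarrow> real"
    and gradf :: "'a \<Rightarrow> 'a"
    and g :: "'m::finite \<Rightarrow> 'a \<Rightarrow> real"
    and gradg :: "'m \<Rightarrow> 'a \<Rightarrow> 'a"
    and c Lmin Lmax tau :: real
    and x :: "nat \<Rightarrow> 'a" and Lf :: "nat \<Rightarrow> real" and Lg :: "nat \<Rightarrow> real^'m"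
  assumes "problem_P f gradf P1 P2 g"
    and "assumption_A f gradf P1 P2 g gradg"
    and "assumption_B g gradg"
    and "assumption_C g gradg"
    and "assumption_D f gradf P1 P2 g gradg"
    and "c > 0" and "0 < Lmin" and "Lmin < Lmax" and "tau > 1"
    and "SCP_ls f gradf P1 P2 g gradg c Lmin Lmax tau x Lf Lg"
  shows "\<exists>\<kappa>>0. \<exists>t0::nat. t0 \<ge> 1 \<and>
           (\<forall>t>t0. lim_subdiff (Fbar f P1 P2 g gradg) (x (Suc t), x t, Lg t) \<noteq> {} \<and>
                   infdist 0 (lim_subdiff (Fbar f P1 P2 g gradg) (x (Suc t), x t, Lg t))
                     \<le> \<kappa> * norm (x (Suc t) - x t))"
proof -
  have P: "\<forall>x. (f has_derivative (\<lambda>h. gradf x \<bullet> h)) (at x)" "continuous_on UNIV gradf"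
    "convex_on UNIV P1" "continuous_on UNIV P1" "convex_on UNIV P2" "continuous_on UNIV P2"
    "\<forall>i. continuous_on UNIV (g i)"
    using assms(1) unfolding problem_P_def by auto
  obtain Lf0 where Lf0: "\<forall>x y. norm (gradf x - gradf y) \<le> Lf0 * norm (x - y)"
    using assms(2) unfolding assumption_A_def by blast
  have dg: "\<forall>i x. (g i has_derivative (\<lambda>h. gradg i x \<bullet> h)) (at x)"
    using assms(2) unfolding assumption_A_def by blast
  have "\<forall>i. \<exists>L. \<forall>x y. norm (gradg i x - gradg i y) \<le> L * norm (x - y)"
    using assms(2) unfolding assumption_A_def by blast
  then obtain Lg0 where Lg0: "\<forall>i x y. norm (gradg i x - gradg i y) \<le> Lg0 i * norm (x - y)" by metis
  have lvl: "\<forall>\<alpha>::real. bounded {x. Fobj f P1 P2 g x \<le> ereal \<alpha>}"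
    using assms(2) unfolding assumption_A_def by blast
  have B: "\<forall>i. continuous_on UNIV (gradg i)" "\<forall>x. feas g x \<longrightarrow> (\<exists>d. \<forall>i. g i x = 0 \<longrightarrow> gradg i x \<bullet> d < 0)"
    using assms(3) unfolding assumption_B_def by auto
  have "\<forall>i. \<exists>H :: 'a \<Rightarrow> 'a \<Rightarrow>\<^sub>L 'a. (\<forall>x. (gradg i has_derivative blinfun_apply (H x)) (at x)) \<and> continuous_on UNIV H"
    using assms(4) unfolding assumption_C_def by blast
  then obtain H where H: "\<forall>i. (\<forall>x. (gradg i has_derivative blinfun_apply (H i x)) (at x)) \<and> continuous_on UNIV (H i)" by metis
  obtain Gam gP2 where D: "open Gam" "{x. stationary f gradf P1 P2 g gradg x} \<subseteq> Gam"
        "\<forall>x\<in>Gam. (P2 has_derivative (\<lambda>h. gP2 x \<bullet> h)) (at x)"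
        "\<forall>x\<in>Gam. \<exists>e>0. \<exists>K. \<forall>y\<in>ball x e \<inter> Gam. \<forall>z\<in>ball x e \<inter> Gam. norm (gP2 y - gP2 z) \<le> K * norm (y - z)"
    using assms(5) unfolding assumption_D_def by blast
  obtain xi J TLf TLg Tx where alg: "\<forall>t. xi t \<in> lsubdiff P2 (x t) \<and>
           Lmin \<le> TLf t 0 \<and> TLf t 0 \<le> Lmax \<and>
           (\<forall>i. Lmin \<le> TLg t 0 $ i \<and> TLg t 0 $ i \<le> Lmax) \<and>
           (\<forall>j\<le>J t. solves_sub gradf P1 g gradg (x t) (xi t) (TLf t j) (TLg t j) (Tx t j)) \<and>
           (\<forall>j<J t. \<not> accept f P1 P2 g c (x t) (Tx t j) \<and>
               (if \<not> feas g (Tx t j)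
                then TLg t (Suc j) = tau *\<^sub>R TLg t j \<and> TLf t (Suc j) = TLf t j
                else TLf t (Suc j) = tau * TLf t j \<and> TLg t (Suc j) = TLg t j)) \<and>
           accept f P1 P2 g c (x t) (Tx t (J t)) \<and>
           x (Suc t) = Tx t (J t) \<and> Lf t = TLf t (J t) \<and> Lg t = TLg t (J t)"
    and x0: "feas g (x 0)"
    using assms(10) unfolding SCP_ls_def by blast
  have Lfl: "max Lf0 0 \<ge> 0" "\<And>y z. norm (gradf y - gradf z) \<le> max Lf0 0 * norm (y - z)"
  proof -
    show "max Lf0 0 \<ge> 0" by simp
    fix y z :: 'a
    have "Lf0 * norm (y - z) \<le> max Lf0 0 * norm (y - z)" by (intro mult_right_mono) auto
    thus "norm (gradf y - gradf z) \<le> max Lf0 0 * norm (y - z)" using Lf0 by (meson order_trans)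
  qed
  have Lgl: "\<And>i. max (Lg0 i) 0 \<ge> 0" "\<And>i y z. norm (gradg i y - gradg i z) \<le> max (Lg0 i) 0 * norm (y - z)"
  proof -
    show "\<And>i. max (Lg0 i) 0 \<ge> 0" by simp
    fix i and y z :: 'a
    have "Lg0 i * norm (y - z) \<le> max (Lg0 i) 0 * norm (y - z)" by (intro mult_right_mono) auto
    thus "norm (gradg i y - gradg i z) \<le> max (Lg0 i) 0 * norm (y - z)" using Lg0 by (meson order_trans)
  qed
  interpret S: scp f P1 P2 gradf g gradg c Lmin Lmax tau x Lf Lg xi J TLf TLg Tx "max Lf0 0" "\<lambda>i. max (Lg0 i) 0" Gam gP2 H
  proof (unfold_locales)
    show "\<And>z. (f has_derivative (\<lambda>h. gradf z \<bullet> h)) (at z)" using P(1) by blast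
    show "continuous_on UNIV gradf" "convex_on UNIV P1" "continuous_on UNIV P1" "convex_on UNIV P2" "continuous_on UNIV P2"
      using P by auto
    show "\<And>i. continuous_on UNIV (g i)" using P(7) by blast
    show "max Lf0 0 \<ge> 0" "\<And>y z. norm (gradf y - gradf z) \<le> max Lf0 0 * norm (y - z)" by (rule Lfl(1), rule Lfl(2))
    show "\<And>i z. (g i has_derivative (\<lambda>h. gradg i z \<bullet> h)) (at z)" using dg by blast
    show "\<And>i. max (Lg0 i) 0 \<ge> 0" "\<And>i y z. norm (gradg i y - gradg i z) \<le> max (Lg0 i) 0 * norm (y - z)" by (rule Lgl(1), rule Lgl(2))
    show "\<And>\<alpha>. bounded {z. Fobj f P1 P2 g z \<le> ereal \<alpha>}" using lvl by blast
    show "\<And>i. continuous_on UNIV (gradg i)" using B(1) by blast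
    show "\<And>z. feas g z \<Longrightarrow> \<exists>d. \<forall>i. g i z = 0 \<longrightarrow> gradg i z \<bullet> d < 0" using B(2) by blast
    show "\<And>i z. (gradg i has_derivative blinfun_apply (H i z)) (at z)" "\<And>i. continuous_on UNIV (H i)" using H by blast+
    show "open Gam" by (rule D(1))
    show "\<And>z. stationary f gradf P1 P2 g gradg z \<Longrightarrow> z \<in> Gam" using D(2) by blast
    show "\<And>z. z \<in> Gam \<Longrightarrow> (P2 has_derivative (\<lambda>h. gP2 z \<bullet> h)) (at z)" using D(3) by blast
    show "\<And>z. z \<in> Gam \<Longrightarrow> \<exists>e>0. \<exists>K. \<forall>y\<in>ball z e \<inter> Gam. \<forall>w\<in>ball z e \<inter> Gam. norm (gP2 y - gP2 w) \<le> K * norm (y - w)"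
      using D(4) by blast
    show "c > 0" "0 < Lmin" "Lmin < Lmax" "tau > 1" using assms(6-9) by auto
    show "feas g (x 0)" by (rule x0)
    show "\<And>t. xi t \<in> lsubdiff P2 (x t) \<and>
           Lmin \<le> TLf t 0 \<and> TLf t 0 \<le> Lmax \<and>
           (\<forall>i. Lmin \<le> TLg t 0 $ i \<and> TLg t 0 $ i \<le> Lmax) \<and>
           (\<forall>j\<le>J t. solves_sub gradf P1 g gradg (x t) (xi t) (TLf t j) (TLg t j) (Tx t j)) \<and>
           (\<forall>j<J t. \<not> accept f P1 P2 g c (x t) (Tx t j) \<and>
               (if \<not> feas g (Tx t j)
                then TLg t (Suc j) = tau *\<^sub>R TLg t j \<and> TLf t (Suc j) = TLf t j
                else TLf t (Suc j) = tau * TLf t j \<and> TLg t (Suc j) = TLg t j)) \<and>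
           accept f P1 P2 g c (x t) (Tx t (J t)) \<and>
           x (Suc t) = Tx t (J t) \<and> Lf t = TLf t (J t) \<and> Lg t = TLg t (J t)" using alg by blast
  qed
  show ?thesis by (rule S.main_loc)
qed

end
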